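(* Let $R=k[x_1,\dots,x_n]$ with the standard grading, let $G$ be a group acting on $R$ by permuting the variables, and let $I\subset R$ be a homogeneous ideal. Assume that every monomial initial ideal of $I$ is generated in degrees $\le d$. If $G$ acts monomially on $I$ up to degree $d$, then the action of $G$ on weight vectors induces automorphisms of the Gröbner fan of $I$: for each $g\in G$, the map $w\mapsto g(w)$ sends each equivalence class $C[w]$ onto an equivalence class $C[w']$, hence maps the Gröbner fan of $I$ onto itself.
   Context: For $h\in R$, $\mathrm{mon}(h)$ is the set of monomials appearing in $h$ with nonzero coefficient. $G$ acts monomially on $I$ up to degree $d$ if for every $h\in I$ of degree $\le d$ and every $g\in G$ there is $h'\in I$ with $\mathrm{mon}(h')=\mathrm{mon}(g(h))$. Writing $g(x_i)=x_{g(i)}$, for $w=(w_1,\dots,w_n)\in\mathbb{R}^n$ set $g(w)=(w_{g(1)},\dots,w_{g(n)})$. For $w\in\mathbb{R}^n$, $\mathrm{in}_w(I)$ is the ideal generated by the $w$-initial forms of elements of $I$, $C[w]=\{w'\in\mathbb{R}^n:\mathrm{in}_{w'}(I)=\mathrm{in}_w(I)\}$, and the Gröbner fan of $I$ is the fan formed by the closures of the sets $C[w]$. *)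

theory Defs
  imports "HOL-Analysis.Analysis" "HOL-Library.Poly_Mapping"
begin

type_synonym 'n monom = "'n \<Rightarrow>\<^sub>0 nat"
type_synonym ('n, 'k) mpoly = "'n monom \<Rightarrow>\<^sub>0 'k"

definition mon :: "('n, 'k::zero) mpoly \<Rightarrow> 'n monom set" where
  "mon h = Poly_Mapping.keys h"

definition monom_deg :: "('n::finite) monom \<Rightarrow> nat" where
  "monom_deg m = (\<Sum>i\<in>UNIV. Poly_Mapping.lookup m i)"

definition deg_le :: "('n::finite, 'k::zero) mpoly \<Rightarrow> nat \<Rightarrow> bool" where
  "deg_le h d \<longleftrightarrow> (\<forall>m\<in>mon h. monom_deg m \<le> d)"

definition is_ideal :: "('n, 'k::comm_ring_1) mpoly set \<Rightarrow> bool" where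
  "is_ideal I \<longleftrightarrow> 0 \<in> I \<and> (\<forall>f\<in>I. \<forall>g\<in>I. f + g \<in> I) \<and> (\<forall>f\<in>I. \<forall>r. r * f \<in> I)"

definition ideal_gen :: "('n, 'k::comm_ring_1) mpoly set \<Rightarrow> ('n, 'k) mpoly set" where
  "ideal_gen S = \<Inter> {J. is_ideal J \<and> S \<subseteq> J}"

definition hcomp :: "nat \<Rightarrow> ('n::finite, 'k::zero) mpoly \<Rightarrow> ('n, 'k) mpoly" where
  "hcomp e h = Abs_poly_mapping (\<lambda>m. if monom_deg m = e then Poly_Mapping.lookup h m else 0)"

definition homogeneous_ideal :: "('n::finite, 'k::comm_ring_1) mpoly set \<Rightarrow> bool" where
  "homogeneous_ideal I \<longleftrightarrow> is_ideal I \<and> (\<forall>h\<in>I. \<forall>e. hcomp e h \<in> I)"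

definition generated_in_degrees_le :: "('n::finite, 'k::comm_ring_1) mpoly set \<Rightarrow> nat \<Rightarrow> bool" where
  "generated_in_degrees_le J d \<longleftrightarrow> J = ideal_gen {f\<in>J. deg_le f d}"

definition term_order :: "('n monom \<Rightarrow> 'n monom \<Rightarrow> bool) \<Rightarrow> bool" where
  "term_order le \<longleftrightarrow>
     (\<forall>a. le a a) \<and> (\<forall>a b. le a b \<and> le b a \<longrightarrow> a = b) \<and>
     (\<forall>a b c. le a b \<and> le b c \<longrightarrow> le a c) \<and> (\<forall>a b. le a b \<or> le b a) \<and>
     (\<forall>a. le 0 a) \<and> (\<forall>a b c. le a b \<longrightarrow> le (a + c) (b + c))"

definition lead_mon :: "('n monom \<Rightarrow> 'n monom \<Rightarrow> bool) \<Rightarrow> ('n, 'k::zero) mpoly \<Rightarrow> 'n monom" where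
  "lead_mon le f = (THE m. m \<in> mon f \<and> (\<forall>m'\<in>mon f. le m' m))"

definition init_ideal_to :: "('n monom \<Rightarrow> 'n monom \<Rightarrow> bool) \<Rightarrow> ('n, 'k::comm_ring_1) mpoly set \<Rightarrow> ('n, 'k) mpoly set" where
  "init_ideal_to le I = ideal_gen {Poly_Mapping.single (lead_mon le f) 1 | f. f \<in> I \<and> f \<noteq> 0}"

definition monomial_initial_ideals :: "('n, 'k::comm_ring_1) mpoly set \<Rightarrow> ('n, 'k) mpoly set set" where
  "monomial_initial_ideals I = {init_ideal_to le I | le. term_order le}"

definition wt :: "real ^ ('n::finite) \<Rightarrow> 'n monom \<Rightarrow> real" where
  "wt w m = (\<Sum>i\<in>UNIV. w $ i * real (Poly_Mapping.lookup m i))"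

definition init_form :: "real ^ ('n::finite) \<Rightarrow> ('n, 'k::zero) mpoly \<Rightarrow> ('n, 'k) mpoly" where
  "init_form w f = Abs_poly_mapping (\<lambda>m.
      if m \<in> mon f \<and> (\<forall>m'\<in>mon f. wt w m' \<le> wt w m) then Poly_Mapping.lookup f m else 0)"

definition init_ideal :: "real ^ ('n::finite) \<Rightarrow> ('n, 'k::comm_ring_1) mpoly set \<Rightarrow> ('n, 'k) mpoly set" where
  "init_ideal w I = ideal_gen (init_form w ` I)"

definition Ccone :: "('n::finite, 'k::comm_ring_1) mpoly set \<Rightarrow> real ^ 'n \<Rightarrow> (real ^ 'n) set" where
  "Ccone I w = {w'. init_ideal w' I = init_ideal w I}"

definition groebner_fan :: "('n::finite, 'k::comm_ring_1) mpoly set \<Rightarrow> (real ^ 'n) set set" where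
  "groebner_fan I = {closure (Ccone I w) | w. True}"

text \<open>Action of a permutation g of the variables: g(x_i) = x_(g i).\<close>
definition act_mon :: "('n \<Rightarrow> 'n) \<Rightarrow> 'n monom \<Rightarrow> 'n monom" where
  "act_mon g m = Poly_Mapping.map_key (inv g) m"

definition act_poly :: "('n \<Rightarrow> 'n) \<Rightarrow> ('n, 'k::zero) mpoly \<Rightarrow> ('n, 'k) mpoly" where
  "act_poly g h = Poly_Mapping.map_key (act_mon (inv g)) h"

definition act_wt :: "('n::finite \<Rightarrow> 'n) \<Rightarrow> real ^ 'n \<Rightarrow> real ^ 'n" where
  "act_wt g w = (\<chi> i. w $ g i)"

definition perm_group :: "('n \<Rightarrow> 'n) set \<Rightarrow> bool" where
  "perm_group G \<longleftrightarrow> id \<in> G \<and> (\<forall>g\<in>G. bij g \<and> inv g \<in> G) \<and> (\<forall>g\<in>G. \<forall>h\<in>G. g \<circ> h \<in> G)"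

definition acts_monomially_upto :: "('n \<Rightarrow> 'n) set \<Rightarrow> ('n::finite, 'k::comm_ring_1) mpoly set \<Rightarrow> nat \<Rightarrow> bool" where
  "acts_monomially_upto G I d \<longleftrightarrow>
     (\<forall>h\<in>I. deg_le h d \<longrightarrow> (\<forall>g\<in>G. \<exists>h'\<in>I. mon h' = mon (act_poly g h)))"

end

theory Submission
  imports Defs
begin

lemma monom_add_cancel: "(m::'a monom) + k = m + q \<longleftrightarrow> k = q"
  by (metis add_diff_cancel_left')

lemma lookup_single_mult:
  fixes m k :: "'a monom"
  shows "Poly_Mapping.lookup (Poly_Mapping.single m c * p) (m + k) = (c::'b::comm_semiring_1) * Poly_Mapping.lookup p k"
proof -
  have "Poly_Mapping.lookup (Poly_Mapping.single m c * p) (m + k)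
     = Sum_any (\<lambda>l. Poly_Mapping.lookup (Poly_Mapping.single m c) l * Sum_any (\<lambda>q. Poly_Mapping.lookup p q when m + k = l + q))"
    by (rule lookup_mult)
  also have "\<dots> = Sum_any (\<lambda>l. ((c * Sum_any (\<lambda>q. Poly_Mapping.lookup p q when m + k = l + q)) when m = l))"
    by (simp add: lookup_single when_mult)
  also have "\<dots> = c * Sum_any (\<lambda>q. Poly_Mapping.lookup p q when m + k = m + q)"
    by simp
  also have "Sum_any (\<lambda>q. Poly_Mapping.lookup p q when m + k = m + q) = Sum_any (\<lambda>q. Poly_Mapping.lookup p q when k = q)"
    by (simp only: monom_add_cancel)
  finally show ?thesis by simp
qed

lemma keys_single_mult_sub:
  fixes m :: "'a monom"
  shows "Poly_Mapping.keys (Poly_Mapping.single m (c::'b::comm_semiring_1) * p) \<subseteq> (\<lambda>k. m + k) ` Poly_Mapping.keys p"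
  using keys_mult[of "Poly_Mapping.single m c" p] by (auto split: if_splits)

lemma keys_single_mult:
  fixes m :: "'a monom"
  assumes "(c::'b::field) \<noteq> 0"
  shows "Poly_Mapping.keys (Poly_Mapping.single m c * p) = (\<lambda>k. m + k) ` Poly_Mapping.keys p"
proof
  show "Poly_Mapping.keys (Poly_Mapping.single m c * p) \<subseteq> (\<lambda>k. m + k) ` Poly_Mapping.keys p"
    by (rule keys_single_mult_sub)
  show "(\<lambda>k. m + k) ` Poly_Mapping.keys p \<subseteq> Poly_Mapping.keys (Poly_Mapping.single m c * p)"
    using assms by (auto simp: in_keys_iff lookup_single_mult)
qed

lemma lookup_single_mult_other:
  fixes m :: "'a monom"
  assumes "x \<notin> (\<lambda>k. m + k) ` Poly_Mapping.keys p"
  shows "Poly_Mapping.lookup (Poly_Mapping.single m (c::'b::comm_semiring_1) * p) x = 0"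
  using keys_single_mult_sub[of m c p] assms by (auto simp: in_keys_iff)

lemma keys_minus_sub: "Poly_Mapping.keys (p - q) \<subseteq> Poly_Mapping.keys p \<union> Poly_Mapping.keys (q::'a \<Rightarrow>\<^sub>0 'b::ab_group_add)"
  by (auto simp: in_keys_iff lookup_minus)

lemma keys_empty_iff: "Poly_Mapping.keys p = {} \<longleftrightarrow> p = 0"
  by (auto simp: in_keys_iff intro!: poly_mapping_eqI)

lemma lookup_smult: "Poly_Mapping.lookup (Poly_Mapping.single (0::'a monom) (c::'b::comm_semiring_1) * p) x = c * Poly_Mapping.lookup p x"
  using lookup_single_mult[of 0 c p x] by simp

definition rst :: "('a \<Rightarrow> bool) \<Rightarrow> ('a \<Rightarrow>\<^sub>0 'b::zero) \<Rightarrow> 'a \<Rightarrow>\<^sub>0 'b" where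
  "rst P h = Abs_poly_mapping (\<lambda>m. if P m then Poly_Mapping.lookup h m else 0)"

lemma lookup_rst [simp]: "Poly_Mapping.lookup (rst P h) m = (if P m then Poly_Mapping.lookup h m else 0)"
proof -
  have "finite {m. (if P m then Poly_Mapping.lookup h m else 0) \<noteq> 0}"
    by (rule finite_subset[of _ "Poly_Mapping.keys h"]) (auto simp: in_keys_iff)
  then show ?thesis unfolding rst_def by simp
qed

lemma keys_rst [simp]: "Poly_Mapping.keys (rst P h) = {m \<in> Poly_Mapping.keys h. P m}"
  by (auto simp: in_keys_iff split: if_splits)

lemma rst_zero [simp]: "rst P 0 = 0"
  by (rule poly_mapping_eqI) simp

lemma rst_add: "rst P (a + b) = rst P a + rst P b"
  by (rule poly_mapping_eqI) (simp add: lookup_add)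

lemma rst_minus: "rst P (a - b) = rst P a - rst P (b::'a \<Rightarrow>\<^sub>0 'b::ab_group_add)"
  by (rule poly_mapping_eqI) (simp add: lookup_minus)

lemma rst_rst: "rst P (rst Q h) = rst (\<lambda>m. P m \<and> Q m) h"
  by (rule poly_mapping_eqI) simp

lemma rst_id: "(\<And>m. m \<in> Poly_Mapping.keys h \<Longrightarrow> P m) \<Longrightarrow> rst P h = h"
  by (rule poly_mapping_eqI) (auto simp: in_keys_iff)

lemma rst_eq_zero: "(\<And>m. m \<in> Poly_Mapping.keys h \<Longrightarrow> \<not> P m) \<Longrightarrow> rst P h = 0"
  by (rule poly_mapping_eqI) (auto simp: in_keys_iff)

lemma hcomp_rst: "hcomp e h = rst (\<lambda>m. monom_deg m = e) h"
  unfolding hcomp_def rst_def by simp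

definition MX :: "real ^ ('n::finite) \<Rightarrow> 'n monom set \<Rightarrow> 'n monom set" where
  "MX w S = {m\<in>S. \<forall>m'\<in>S. wt w m' \<le> wt w m}"

lemma init_form_rst: "init_form w f = rst (\<lambda>m. m \<in> MX w (Poly_Mapping.keys f)) f"
  unfolding init_form_def rst_def MX_def mon_def by simp

lemma keys_init_form: "Poly_Mapping.keys (init_form w f) = MX w (Poly_Mapping.keys f)"
  unfolding init_form_rst by (auto simp: MX_def)

definition wcomp :: "real ^ ('n::finite) \<Rightarrow> real \<Rightarrow> ('n, 'k::zero) mpoly \<Rightarrow> ('n, 'k) mpoly" where
  "wcomp w t h = rst (\<lambda>m. wt w m = t) h"

definition homog :: "nat \<Rightarrow> ('n::finite, 'k::zero) mpoly \<Rightarrow> bool" where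
  "homog e f \<longleftrightarrow> (\<forall>m\<in>Poly_Mapping.keys f. monom_deg m = e)"

definition mw :: "real ^ ('n::finite) \<Rightarrow> ('n, 'k::zero) mpoly \<Rightarrow> real" where
  "mw w f = Max (wt w ` Poly_Mapping.keys f)"

lemma mw_props:
  assumes "f \<noteq> 0"
  shows "\<exists>m\<in>Poly_Mapping.keys f. wt w m = mw w f" "\<And>m. m \<in> Poly_Mapping.keys f \<Longrightarrow> wt w m \<le> mw w f"
proof -
  have ne: "Poly_Mapping.keys f \<noteq> {}" using assms by simp
  have "mw w f \<in> wt w ` Poly_Mapping.keys f" unfolding mw_def using ne by (intro Max_in) auto
  then show "\<exists>m\<in>Poly_Mapping.keys f. wt w m = mw w f" by auto
  show "\<And>m. m \<in> Poly_Mapping.keys f \<Longrightarrow> wt w m \<le> mw w f" unfolding mw_def by (intro Max_ge) auto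
qed

lemma init_form_wcomp_gen:
  assumes "\<And>m. m \<in> Poly_Mapping.keys f \<Longrightarrow> wt w m \<le> t" "m0 \<in> Poly_Mapping.keys f" "wt w m0 = t"
  shows "init_form w f = wcomp w t f"
proof -
  have "MX w (Poly_Mapping.keys f) = {m \<in> Poly_Mapping.keys f. wt w m = t}"
    using assms unfolding MX_def by force
  then show ?thesis unfolding init_form_rst wcomp_def
    by (intro poly_mapping_eqI) (auto simp: in_keys_iff)
qed

lemma init_form_wcomp: "init_form w f = wcomp w (mw w f) f"
proof (cases "f = 0")
  case True then show ?thesis by (simp add: init_form_rst wcomp_def)
next
  case False
  then obtain m0 where "m0 \<in> Poly_Mapping.keys f" "wt w m0 = mw w f" using mw_props by blast
  then show ?thesis using mw_props(2)[OF False] by (intro init_form_wcomp_gen) auto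
qed

lemma init_form_zero_iff: "init_form w f = 0 \<longleftrightarrow> f = 0"
proof
  assume a: "init_form w f = 0"
  show "f = 0"
  proof (rule ccontr)
    assume f: "f \<noteq> 0"
    then obtain m0 where m0: "m0 \<in> Poly_Mapping.keys f" "wt w m0 = mw w f" using mw_props by blast
    then have "m0 \<in> MX w (Poly_Mapping.keys f)" using mw_props(2)[OF f] by (auto simp: MX_def)
    then show False using a by (simp add: keys_init_form[symmetric])
  qed
qed (simp add: init_form_rst)

lemma keys_wcomp: "Poly_Mapping.keys (wcomp w t h) = {m \<in> Poly_Mapping.keys h. wt w m = t}"
  by (simp add: wcomp_def)

lemma keys_init_form_sub: "Poly_Mapping.keys (init_form w f) \<subseteq> Poly_Mapping.keys f"
  by (auto simp: keys_init_form MX_def)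

lemma lookup_init_form: "Poly_Mapping.lookup (init_form w f) m = (if m \<in> MX w (Poly_Mapping.keys f) then Poly_Mapping.lookup f m else 0)"
  by (simp add: init_form_rst)


lemma ideal_gen_ideal: "is_ideal (ideal_gen S)"
  unfolding ideal_gen_def is_ideal_def by blast

lemma ideal_gen_sub: "S \<subseteq> ideal_gen S"
  unfolding ideal_gen_def by blast

lemma ideal_gen_min: "is_ideal J \<Longrightarrow> S \<subseteq> J \<Longrightarrow> ideal_gen S \<subseteq> J"
  unfolding ideal_gen_def by blast

lemma ideal_zero: "is_ideal J \<Longrightarrow> 0 \<in> J"
  unfolding is_ideal_def by blast

lemma ideal_add: "is_ideal J \<Longrightarrow> f \<in> J \<Longrightarrow> h \<in> J \<Longrightarrow> f + h \<in> J"
  unfolding is_ideal_def by blast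

lemma ideal_mult: "is_ideal J \<Longrightarrow> f \<in> J \<Longrightarrow> r * f \<in> J"
  unfolding is_ideal_def by blast

lemma ideal_diff_smult:
  fixes J :: "('n, 'k::field) mpoly set"
  assumes "is_ideal J" "f \<in> J" "h \<in> J"
  shows "f - Poly_Mapping.single 0 c * h \<in> J"
proof -
  have "f - Poly_Mapping.single 0 c * h = f + Poly_Mapping.single 0 (- c) * h"
    by (rule poly_mapping_eqI) (simp add: lookup_add lookup_minus lookup_smult)
  then show ?thesis using assms ideal_add ideal_mult by metis
qed

lemma ideal_diff:
  fixes J :: "('n, 'k::field) mpoly set"
  assumes "is_ideal J" "f \<in> J" "h \<in> J"
  shows "f - h \<in> J"
  using ideal_diff_smult[OF assms, of 1] by simp

lemma ideal_sum:
  assumes "is_ideal J" "finite A" "\<And>a. a \<in> A \<Longrightarrow> F a \<in> J"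
  shows "sum F A \<in> J"
  using assms(2,3) by (induction A rule: finite_induct) (auto simp: ideal_zero[OF assms(1)] ideal_add[OF assms(1)])

lemma ideal_gen_keys_upward:
  fixes S :: "('n, 'k::comm_ring_1) mpoly set"
  assumes up: "\<And>b c. b \<in> U \<Longrightarrow> b + c \<in> U"
    and gen: "\<And>s. s \<in> S \<Longrightarrow> Poly_Mapping.keys s \<subseteq> U"
    and f: "f \<in> ideal_gen S"
  shows "Poly_Mapping.keys f \<subseteq> U"
proof -
  have A: "Poly_Mapping.keys (f + h) \<subseteq> U" if "Poly_Mapping.keys f \<subseteq> U" "Poly_Mapping.keys h \<subseteq> U" for f h :: "('n, 'k) mpoly"
    using keys_add[of f h] that by auto
  have B: "Poly_Mapping.keys (r * f) \<subseteq> U" if "Poly_Mapping.keys f \<subseteq> U" for f r :: "('n, 'k) mpoly"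
    using keys_mult[of r f] up that by (fastforce simp: add.commute)
  have "is_ideal {f :: ('n, 'k) mpoly. Poly_Mapping.keys f \<subseteq> U}"
    unfolding is_ideal_def
    apply (intro conjI ballI allI)
      apply simp
     apply (simp only: mem_Collect_eq)
     apply (rule A; assumption)
    apply (simp only: mem_Collect_eq)
    apply (rule B; assumption)
    done
  moreover have "S \<subseteq> {f :: ('n, 'k) mpoly. Poly_Mapping.keys f \<subseteq> U}" using gen by auto
  ultimately show ?thesis using f ideal_gen_min by blast
qed

lemma wt_add: "wt w (a + b) = wt w a + wt w b"
  unfolding wt_def by (simp add: lookup_add sum.distrib distrib_left)

lemma wt_zero [simp]: "wt w 0 = 0"
  unfolding wt_def by simp

lemma monom_deg_add: "monom_deg (a + b) = monom_deg a + monom_deg b"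
  unfolding monom_deg_def by (simp add: lookup_add sum.distrib)

lemma monom_deg_zero [simp]: "monom_deg 0 = 0"
  unfolding monom_deg_def by simp

lemma finite_deg: "finite {m :: ('n::finite) monom. monom_deg m = e}"
proof -
  have fin: "finite {g :: 'n \<Rightarrow> nat. \<forall>x. (x \<in> UNIV \<longrightarrow> g x \<in> {..e}) \<and> (x \<notin> UNIV \<longrightarrow> g x = 0)}"
    by (rule finite_set_of_finite_funs) auto
  have "Poly_Mapping.lookup ` {m :: 'n monom. monom_deg m = e} \<subseteq> {g. \<forall>x. (x \<in> UNIV \<longrightarrow> g x \<in> {..e}) \<and> (x \<notin> UNIV \<longrightarrow> g x = 0)}"
  proof -
    have "Poly_Mapping.lookup m x \<le> monom_deg m" for m :: "'n monom" and x
      unfolding monom_deg_def by (rule member_le_sum) auto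
    then show ?thesis by auto
  qed
  then have "finite (Poly_Mapping.lookup ` {m :: 'n monom. monom_deg m = e})"
    using fin finite_subset by blast
  moreover have "inj_on Poly_Mapping.lookup {m :: 'n monom. monom_deg m = e}"
    by (simp add: inj_on_def)
  ultimately show ?thesis by (rule finite_imageD)
qed

section \<open>Linear orders and leading monomials\<close>

definition lin :: "('a \<Rightarrow> 'a \<Rightarrow> bool) \<Rightarrow> bool" where
  "lin le \<longleftrightarrow> (\<forall>a. le a a) \<and> (\<forall>a b. le a b \<and> le b a \<longrightarrow> a = b) \<and>
     (\<forall>a b c. le a b \<and> le b c \<longrightarrow> le a c) \<and> (\<forall>a b. le a b \<or> le b a)"

lemma term_order_lin: "term_order le \<Longrightarrow> lin le"
  unfolding term_order_def lin_def by blast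

lemma lin_refl: "lin le \<Longrightarrow> le a a"
  unfolding lin_def by blast
lemma lin_antisym: "lin le \<Longrightarrow> le a b \<Longrightarrow> le b a \<Longrightarrow> a = b"
  unfolding lin_def by blast
lemma lin_trans: "lin le \<Longrightarrow> le a b \<Longrightarrow> le b c \<Longrightarrow> le a c"
  unfolding lin_def by blast
lemma lin_total: "lin le \<Longrightarrow> le a b \<or> le b a"
  unfolding lin_def by blast

definition lds :: "('a \<Rightarrow> 'a \<Rightarrow> bool) \<Rightarrow> 'a set \<Rightarrow> 'a" where
  "lds le S = (THE m. m \<in> S \<and> (\<forall>m'\<in>S. le m' m))"

lemma lead_mon_lds: "lead_mon le f = lds le (Poly_Mapping.keys f)"
  unfolding lead_mon_def lds_def mon_def by simp

lemma lds_unique: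
  assumes "lin le" "m \<in> S" "\<And>m'. m' \<in> S \<Longrightarrow> le m' m"
  shows "lds le S = m"
  unfolding lds_def
proof (rule the_equality)
  show "m \<in> S \<and> (\<forall>m'\<in>S. le m' m)" using assms by blast
  fix x assume "x \<in> S \<and> (\<forall>m'\<in>S. le m' x)"
  then show "x = m" using assms lin_antisym[OF assms(1)] by blast
qed

lemma lds_ex:
  assumes "lin le" "finite S" "S \<noteq> {}"
  shows "\<exists>m\<in>S. \<forall>m'\<in>S. le m' m"
  using assms(2,3)
proof (induction S rule: finite_ne_induct)
  case (singleton x) then show ?case using lin_refl[OF assms(1)] by blast
next
  case (insert x F)
  then obtain m where m: "m \<in> F" "\<forall>m'\<in>F. le m' m" by blast
  show ?case
  proof (cases "le x m")
    case True then show ?thesis using m by blast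
  next
    case False
    then have "le m x" using lin_total[OF assms(1)] by blast
    then have "\<forall>m'\<in>insert x F. le m' x" using m lin_trans[OF assms(1)] lin_refl[OF assms(1)] by blast
    then show ?thesis by blast
  qed
qed

lemma lds_props:
  assumes "lin le" "finite S" "S \<noteq> {}"
  shows "lds le S \<in> S" "\<And>m'. m' \<in> S \<Longrightarrow> le m' (lds le S)"
proof -
  obtain m where m: "m \<in> S" "\<forall>m'\<in>S. le m' m" using lds_ex[OF assms] by blast
  have "lds le S = m" using lds_unique[OF assms(1) m(1)] m(2) by blast
  then show "lds le S \<in> S" "\<And>m'. m' \<in> S \<Longrightarrow> le m' (lds le S)" using m by auto
qed

lemma lds_keys:
  assumes "lin le" "f \<noteq> 0"
  shows "lds le (Poly_Mapping.keys f) \<in> Poly_Mapping.keys f"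
    "\<And>m'. m' \<in> Poly_Mapping.keys f \<Longrightarrow> le m' (lds le (Poly_Mapping.keys f))"
  using lds_props[OF assms(1) finite_keys] assms(2) by auto

lemma lds_cong:
  assumes "lin le" "lin le'" "finite S" "S \<noteq> {}" "\<And>a b. a \<in> S \<Longrightarrow> b \<in> S \<Longrightarrow> le a b = le' a b"
  shows "lds le S = lds le' S"
proof -
  note p = lds_props[OF assms(1,3,4)]
  show ?thesis by (rule lds_unique[OF assms(2), symmetric]) (use p assms(5) in blast)+
qed

lemma lds_image:
  assumes "lin le" "lin le'" "finite S" "S \<noteq> {}" "\<And>a b. a \<in> S \<Longrightarrow> b \<in> S \<Longrightarrow> le' (\<phi> a) (\<phi> b) = le a b"
  shows "lds le' (\<phi> ` S) = \<phi> (lds le S)"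
proof -
  note p = lds_props[OF assms(1,3,4)]
  show ?thesis by (rule lds_unique[OF assms(2)]) (use p assms(5) in blast)+
qed

definition ordw :: "('n monom \<Rightarrow> 'n monom \<Rightarrow> bool) \<Rightarrow> real ^ ('n::finite) \<Rightarrow> 'n monom \<Rightarrow> 'n monom \<Rightarrow> bool" where
  "ordw le w a b \<longleftrightarrow> wt w a < wt w b \<or> (wt w a = wt w b \<and> le a b)"

lemma lin_ordw: "lin le \<Longrightarrow> lin (ordw le w)"
proof -
  assume L: "lin le"
  have r: "le a a" and an: "le a b \<Longrightarrow> le b a \<Longrightarrow> a = b" and tr: "le a b \<Longrightarrow> le b c \<Longrightarrow> le a c"
    and to: "le a b \<or> le b a" for a b c using L unfolding lin_def by blast+
  show ?thesis unfolding lin_def ordw_def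
  proof (intro conjI allI impI)
    fix a b c
    show "wt w a < wt w a \<or> wt w a = wt w a \<and> le a a" using r by simp
    show "(wt w a < wt w b \<or> wt w a = wt w b \<and> le a b) \<and> (wt w b < wt w a \<or> wt w b = wt w a \<and> le b a) \<Longrightarrow> a = b"
      using an by auto
    show "(wt w a < wt w b \<or> wt w a = wt w b \<and> le a b) \<and> (wt w b < wt w c \<or> wt w b = wt w c \<and> le b c) \<Longrightarrow>
       wt w a < wt w c \<or> wt w a = wt w c \<and> le a c"
      using tr by auto
    show "(wt w a < wt w b \<or> wt w a = wt w b \<and> le a b) \<or> (wt w b < wt w a \<or> wt w b = wt w a \<and> le b a)"
      using to by auto
  qed
qed

lemma ordw_wt: "ordw le w a b \<Longrightarrow> wt w a \<le> wt w b"
  unfolding ordw_def by auto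

lemma lead_init_form:
  assumes "lin le" "f \<noteq> 0"
  shows "lds le (Poly_Mapping.keys (init_form w f)) = lds (ordw le w) (Poly_Mapping.keys f)"
proof -
  have lo: "lin (ordw le w)" using assms(1) by (rule lin_ordw)
  let ?a = "lds (ordw le w) (Poly_Mapping.keys f)"
  have a: "?a \<in> Poly_Mapping.keys f" "\<And>m. m \<in> Poly_Mapping.keys f \<Longrightarrow> ordw le w m ?a"
    using lds_keys[OF lo assms(2)] by auto
  have aMX: "?a \<in> MX w (Poly_Mapping.keys f)"
    unfolding MX_def using a ordw_wt by blast
  show ?thesis
  proof (rule lds_unique[OF assms(1)])
    show "?a \<in> Poly_Mapping.keys (init_form w f)" using aMX by (simp add: keys_init_form)
    fix m assume "m \<in> Poly_Mapping.keys (init_form w f)"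
    then have "m \<in> MX w (Poly_Mapping.keys f)" by (simp add: keys_init_form)
    then have "m \<in> Poly_Mapping.keys f" "wt w m = wt w ?a" using aMX a(1) unfolding MX_def by (auto intro!: order_antisym)
    then show "le m ?a" using a(2)[of m] unfolding ordw_def by auto
  qed
qed


section \<open>Weight components and the structure of initial ideals\<close>

lemma wcomp_add: "wcomp w t (a + b) = wcomp w t a + wcomp w t b"
  unfolding wcomp_def by (rule rst_add)

lemma wcomp_zero [simp]: "wcomp w t 0 = 0"
  unfolding wcomp_def by simp

lemma wcomp_wcomp: "wcomp w t (wcomp w s h) = (if s = t then wcomp w t h else 0)"
  unfolding wcomp_def by (rule poly_mapping_eqI) auto

lemma wcomp_init_form: "wcomp w t (init_form w f) = (if t = mw w f then init_form w f else 0)"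
  by (simp add: init_form_wcomp wcomp_wcomp)

lemma wcomp_single_mult:
  fixes h :: "('n::finite, 'k::field) mpoly"
  shows "wcomp w t (Poly_Mapping.single m c * h) = Poly_Mapping.single m c * wcomp w (t - wt w m) h"
proof (rule poly_mapping_eqI)
  fix x
  show "Poly_Mapping.lookup (wcomp w t (Poly_Mapping.single m c * h)) x =
        Poly_Mapping.lookup (Poly_Mapping.single m c * wcomp w (t - wt w m) h) x"
  proof (cases "\<exists>k. x = m + k")
    case True
    then obtain k where x: "x = m + k" by blast
    show ?thesis unfolding x wcomp_def by (simp add: lookup_single_mult wt_add)
  next
    case False
    then show ?thesis unfolding wcomp_def
      by (simp add: lookup_single_mult_other image_iff)
  qed
qed

lemma init_form_single_mult:
  fixes f :: "('n::finite, 'k::field) mpoly"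
  assumes c: "c \<noteq> 0"
  shows "init_form w (Poly_Mapping.single m c * f) = Poly_Mapping.single m c * init_form w f"
proof (cases "f = 0")
  case True then show ?thesis by (simp add: init_form_rst)
next
  case False
  let ?t = "mw w f"
  obtain m0 where m0: "m0 \<in> Poly_Mapping.keys f" "wt w m0 = ?t" using mw_props[OF False] by blast
  have ks: "Poly_Mapping.keys (Poly_Mapping.single m c * f) = (\<lambda>k. m + k) ` Poly_Mapping.keys f"
    by (rule keys_single_mult[OF c])
  have A: "\<And>x. x \<in> Poly_Mapping.keys (Poly_Mapping.single m c * f) \<Longrightarrow> wt w x \<le> ?t + wt w m"
    using ks mw_props(2)[OF False] by (auto simp: wt_add)
  have B: "m + m0 \<in> Poly_Mapping.keys (Poly_Mapping.single m c * f)" using ks m0 by auto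
  have C: "wt w (m + m0) = ?t + wt w m" using m0 by (simp add: wt_add)
  have "init_form w (Poly_Mapping.single m c * f) = wcomp w (?t + wt w m) (Poly_Mapping.single m c * f)"
    using init_form_wcomp_gen[OF A B C] .
  also have "\<dots> = Poly_Mapping.single m c * init_form w f"
    by (simp add: wcomp_single_mult init_form_wcomp)
  finally show ?thesis .
qed

lemma poly_sum_single: "p = (\<Sum>m\<in>Poly_Mapping.keys p. Poly_Mapping.single m (Poly_Mapping.lookup p m))"
proof (rule poly_mapping_eqI)
  fix x
  have "Poly_Mapping.lookup (\<Sum>m\<in>Poly_Mapping.keys p. Poly_Mapping.single m (Poly_Mapping.lookup p m)) x
      = (\<Sum>m\<in>Poly_Mapping.keys p. (if m = x then Poly_Mapping.lookup p m else 0))"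
    by (simp add: lookup_sum lookup_single when_def)
  also have "\<dots> = Poly_Mapping.lookup p x"
    by (simp add: sum.delta in_keys_iff)
  finally show "Poly_Mapping.lookup p x = Poly_Mapping.lookup (\<Sum>m\<in>Poly_Mapping.keys p. Poly_Mapping.single m (Poly_Mapping.lookup p m)) x" by simp
qed

lemma mw_eq_of_wcomp:
  assumes "wcomp w t (init_form w f) = init_form w f" "f \<noteq> 0"
  shows "mw w f = t"
proof (rule ccontr)
  assume "mw w f \<noteq> t"
  then have "init_form w f = 0" using assms(1) by (simp add: wcomp_init_form)
  then show False using assms(2) by (simp add: init_form_zero_iff)
qed

lemma homogeneous_ideal_is_ideal: "homogeneous_ideal I \<Longrightarrow> is_ideal I"
  unfolding homogeneous_ideal_def by blast

lemma ideal_smult: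
  fixes J :: "('n, 'k::field) mpoly set"
  shows "is_ideal J \<Longrightarrow> f \<in> J \<Longrightarrow> Poly_Mapping.single m c * f \<in> J"
  by (rule ideal_mult)

context
  fixes I :: "('n::finite, 'k::field) mpoly set" and w :: "real ^ 'n"
  assumes idI: "is_ideal I"
begin

lemma In_zero: "0 \<in> init_form w ` I"
proof
  show "0 = init_form w 0" by (simp add: init_form_rst)
  show "0 \<in> I" using idI by (rule ideal_zero)
qed

definition Zs :: "('n, 'k) mpoly set" where
  "Zs = {h. \<forall>t. wcomp w t h \<in> init_form w ` I}"

lemma in_add:
  assumes f1: "f1 \<in> I" and f2: "f2 \<in> I"
    and e1: "wcomp w t (init_form w f1) = init_form w f1"
    and e2: "wcomp w t (init_form w f2) = init_form w f2"
  shows "init_form w f1 + init_form w f2 \<in> init_form w ` I"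
proof (cases "f1 = 0 \<or> f2 = 0")
  case True
  then show ?thesis using f1 f2 by (auto simp: init_form_rst)
next
  case False
  then have n1: "f1 \<noteq> 0" and n2: "f2 \<noteq> 0" by auto
  have t1: "mw w f1 = t" using mw_eq_of_wcomp[OF e1 n1] .
  have t2: "mw w f2 = t" using mw_eq_of_wcomp[OF e2 n2] .
  have sum: "init_form w f1 + init_form w f2 = wcomp w t (f1 + f2)"
    by (simp add: init_form_wcomp t1 t2 wcomp_add)
  show ?thesis
  proof (cases "wcomp w t (f1 + f2) = 0")
    case True
    then show ?thesis using sum In_zero by simp
  next
    case False
    then obtain m0 where m0: "m0 \<in> Poly_Mapping.keys (wcomp w t (f1 + f2))"
      by (metis keys_empty_iff ex_in_conv)
    have le: "wt w x \<le> t" if "x \<in> Poly_Mapping.keys (f1 + f2)" for x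
      using that keys_add[of f1 f2] mw_props(2)[OF n1, where w=w and m=x] mw_props(2)[OF n2, where w=w and m=x] t1 t2 by auto
    have "init_form w (f1 + f2) = wcomp w t (f1 + f2)"
      using m0 le by (intro init_form_wcomp_gen[of _ _ _ m0]) (auto simp: keys_wcomp)
    then show ?thesis using sum ideal_add[OF idI f1 f2] by (metis image_eqI)
  qed
qed

lemma Zs_add: "h1 \<in> Zs \<Longrightarrow> h2 \<in> Zs \<Longrightarrow> h1 + h2 \<in> Zs"
proof -
  assume h1: "h1 \<in> Zs" and h2: "h2 \<in> Zs"
  show "h1 + h2 \<in> Zs" unfolding Zs_def
  proof (intro CollectI allI)
    fix t
    obtain f1 where f1: "f1 \<in> I" "wcomp w t h1 = init_form w f1" using h1 unfolding Zs_def by blast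
    obtain f2 where f2: "f2 \<in> I" "wcomp w t h2 = init_form w f2" using h2 unfolding Zs_def by blast
    have e1: "wcomp w t (init_form w f1) = init_form w f1"
      using f1(2) by (metis wcomp_wcomp)
    have e2: "wcomp w t (init_form w f2) = init_form w f2"
      using f2(2) by (metis wcomp_wcomp)
    show "wcomp w t (h1 + h2) \<in> init_form w ` I"
      using in_add[OF f1(1) f2(1) e1 e2] f1(2) f2(2) by (simp add: wcomp_add)
  qed
qed

lemma Zs_zero: "0 \<in> Zs"
  unfolding Zs_def using In_zero by simp

lemma Zs_sum: "finite A \<Longrightarrow> (\<And>a. a \<in> A \<Longrightarrow> F a \<in> Zs) \<Longrightarrow> sum F A \<in> Zs"
  by (induction A rule: finite_induct) (auto simp: Zs_zero Zs_add)

lemma Zs_single_mult: "h \<in> Zs \<Longrightarrow> Poly_Mapping.single m c * h \<in> Zs"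
proof (cases "c = 0")
  case True
  then show "h \<in> Zs \<Longrightarrow> Poly_Mapping.single m c * h \<in> Zs" using Zs_zero by simp
next
  case False
  assume h: "h \<in> Zs"
  show "Poly_Mapping.single m c * h \<in> Zs" unfolding Zs_def
  proof (intro CollectI allI)
    fix t
    obtain f where f: "f \<in> I" "wcomp w (t - wt w m) h = init_form w f" using h unfolding Zs_def by blast
    have "wcomp w t (Poly_Mapping.single m c * h) = init_form w (Poly_Mapping.single m c * f)"
      by (simp add: wcomp_single_mult f(2) init_form_single_mult[OF False])
    then show "wcomp w t (Poly_Mapping.single m c * h) \<in> init_form w ` I"
      using ideal_mult[OF idI f(1)] by blast
  qed
qed

lemma Zs_mult: "h \<in> Zs \<Longrightarrow> r * h \<in> Zs"
proof -
  assume h: "h \<in> Zs"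
  have "r * h = (\<Sum>m\<in>Poly_Mapping.keys r. Poly_Mapping.single m (Poly_Mapping.lookup r m) * h)"
    by (subst poly_sum_single[of r]) (simp add: sum_distrib_right)
  also have "\<dots> \<in> Zs" using h by (intro Zs_sum Zs_single_mult) auto
  finally show ?thesis .
qed

lemma Zs_ideal: "is_ideal Zs"
  unfolding is_ideal_def using Zs_zero Zs_add Zs_mult by blast

lemma init_ideal_sub_Zs: "init_ideal w I \<subseteq> Zs"
  unfolding init_ideal_def
proof (rule ideal_gen_min[OF Zs_ideal])
  show "init_form w ` I \<subseteq> Zs"
  proof
    fix p assume "p \<in> init_form w ` I"
    then obtain f where f: "f \<in> I" "p = init_form w f" by blast
    show "p \<in> Zs" unfolding Zs_def
    proof (intro CollectI allI)
      fix t
      show "wcomp w t p \<in> init_form w ` I"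
        using f In_zero by (auto simp: wcomp_init_form)
    qed
  qed
qed

end


lemma keys_hcomp: "Poly_Mapping.keys (hcomp e f) = {m \<in> Poly_Mapping.keys f. monom_deg m = e}"
  by (simp add: hcomp_rst)

lemma hcomp_in: "homogeneous_ideal I \<Longrightarrow> f \<in> I \<Longrightarrow> hcomp e f \<in> I"
  unfolding homogeneous_ideal_def by blast

lemma homog_hcomp: "homog e (hcomp e f)"
  unfolding homog_def by (simp add: keys_hcomp)

lemma FZ:
  fixes I :: "('n::finite, 'k::field) mpoly set"
  assumes hI: "homogeneous_ideal I" and lin: "lin \<sigma>"
    and h: "h \<in> init_ideal w I" "homog e h" "h \<noteq> 0"
  shows "\<exists>f\<in>I. homog e f \<and> f \<noteq> 0 \<and> lds (ordw \<sigma> w) (Poly_Mapping.keys f) = lds \<sigma> (Poly_Mapping.keys h)"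
proof -
  have idI: "is_ideal I" using hI by (rule homogeneous_ideal_is_ideal)
  define a where "a = lds \<sigma> (Poly_Mapping.keys h)"
  have a: "a \<in> Poly_Mapping.keys h" "\<And>m. m \<in> Poly_Mapping.keys h \<Longrightarrow> \<sigma> m a"
    using lds_keys[OF lin h(3)] unfolding a_def by auto
  define t where "t = wt w a"
  have "h \<in> Zs I w" using init_ideal_sub_Zs[OF idI] h(1) by blast
  then obtain f0 where f0: "f0 \<in> I" "wcomp w t h = init_form w f0" unfolding Zs_def[OF idI] by blast
  have aw: "a \<in> Poly_Mapping.keys (wcomp w t h)" using a(1) by (simp add: keys_wcomp t_def)
  then have "init_form w f0 \<noteq> 0" unfolding f0(2) by (metis empty_iff keys_zero)
  then have f0nz: "f0 \<noteq> 0" by (simp add: init_form_zero_iff)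
  have "wcomp w t (init_form w f0) = init_form w f0" using f0(2) wcomp_wcomp[of w t t h] by simp
  then have mwt: "mw w f0 = t" using mw_eq_of_wcomp f0nz by blast
  have kin: "Poly_Mapping.keys (init_form w f0) \<subseteq> Poly_Mapping.keys h"
    unfolding f0(2)[symmetric] keys_wcomp by blast
  define f where "f = hcomp e f0"
  have fI: "f \<in> I" unfolding f_def using hI f0(1) by (rule hcomp_in)
  have hf: "homog e f" unfolding f_def by (rule homog_hcomp)
  have dega: "monom_deg a = e" using a(1) h(2) unfolding homog_def by blast
  have af: "a \<in> Poly_Mapping.keys f"
  proof -
    have "a \<in> Poly_Mapping.keys f0" using aw keys_init_form_sub[of w f0] unfolding f0(2) by blast
    then show ?thesis unfolding f_def keys_hcomp using dega by blast
  qed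
  then have fnz: "f \<noteq> 0" by auto
  have "lds (ordw \<sigma> w) (Poly_Mapping.keys f) = a"
  proof (rule lds_unique[OF lin_ordw[OF lin] af])
    fix m assume m: "m \<in> Poly_Mapping.keys f"
    then have mf0: "m \<in> Poly_Mapping.keys f0" unfolding f_def by (simp add: keys_hcomp)
    have le: "wt w m \<le> t" using mw_props(2)[OF f0nz, where w=w and m=m] mf0 mwt by simp
    show "ordw \<sigma> w m a"
    proof (cases "wt w m = t")
      case True
      have "m \<in> MX w (Poly_Mapping.keys f0)"
        unfolding MX_def using mf0 True mw_props(2)[OF f0nz, where w=w] mwt by auto
      then have "m \<in> Poly_Mapping.keys h" using kin by (simp add: keys_init_form subset_iff)
      then show ?thesis using a(2) True unfolding ordw_def t_def by simp
    next
      case False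
      then show ?thesis using le unfolding ordw_def t_def by simp
    qed
  qed
  then show ?thesis using fI hf fnz unfolding a_def by blast
qed

section \<open>Existence of term orders\<close>

definition lexle :: "('n \<Rightarrow> nat) \<Rightarrow> 'n monom \<Rightarrow> 'n monom \<Rightarrow> bool" where
  "lexle \<iota> a b \<longleftrightarrow> a = b \<or> (\<exists>i. Poly_Mapping.lookup a i < Poly_Mapping.lookup b i \<and>
      (\<forall>j. \<iota> j < \<iota> i \<longrightarrow> Poly_Mapping.lookup a j = Poly_Mapping.lookup b j))"

lemma lex_first_diff:
  fixes \<iota> :: "'n \<Rightarrow> nat"
  assumes "a \<noteq> (b::'n monom)"
  shows "\<exists>i. Poly_Mapping.lookup a i \<noteq> Poly_Mapping.lookup b i \<and>
      (\<forall>j. \<iota> j < \<iota> i \<longrightarrow> Poly_Mapping.lookup a j = Poly_Mapping.lookup b j)"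
proof -
  have "\<exists>i0. Poly_Mapping.lookup a i0 \<noteq> Poly_Mapping.lookup b i0"
  proof (rule ccontr)
    assume "\<not> (\<exists>i0. Poly_Mapping.lookup a i0 \<noteq> Poly_Mapping.lookup b i0)"
    then have "a = b" by (intro poly_mapping_eqI) auto
    then show False using assms by simp
  qed
  then obtain i0 where "Poly_Mapping.lookup a i0 \<noteq> Poly_Mapping.lookup b i0" by blast
  from ex_has_least_nat[of "\<lambda>i. Poly_Mapping.lookup a i \<noteq> Poly_Mapping.lookup b i", OF this, of \<iota>]
  obtain i where i: "Poly_Mapping.lookup a i \<noteq> Poly_Mapping.lookup b i"
    "\<forall>y. Poly_Mapping.lookup a y \<noteq> Poly_Mapping.lookup b y \<longrightarrow> \<iota> i \<le> \<iota> y" by blast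
  show ?thesis
  proof (intro exI conjI allI impI)
    show "Poly_Mapping.lookup a i \<noteq> Poly_Mapping.lookup b i" by (rule i(1))
    fix j assume "\<iota> j < \<iota> i"
    then show "Poly_Mapping.lookup a j = Poly_Mapping.lookup b j" using i(2) not_le by blast
  qed
qed

lemma lexle_term_order:
  fixes \<iota> :: "'n \<Rightarrow> nat"
  assumes inj: "inj \<iota>"
  shows "term_order (lexle \<iota>)"
  unfolding term_order_def
proof (intro conjI allI impI)
  fix a b c :: "'n monom"
  show "lexle \<iota> a a" unfolding lexle_def by simp
  show "lexle \<iota> a b \<and> lexle \<iota> b a \<Longrightarrow> a = b"
  proof -
    assume "lexle \<iota> a b \<and> lexle \<iota> b a"
    then consider "a = b" | i i' where "Poly_Mapping.lookup a i < Poly_Mapping.lookup b i"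
      "\<forall>j. \<iota> j < \<iota> i \<longrightarrow> Poly_Mapping.lookup a j = Poly_Mapping.lookup b j"
      "Poly_Mapping.lookup b i' < Poly_Mapping.lookup a i'"
      "\<forall>j. \<iota> j < \<iota> i' \<longrightarrow> Poly_Mapping.lookup b j = Poly_Mapping.lookup a j"
      unfolding lexle_def by blast
    then show "a = b"
    proof cases
      case (2 i i')
      note H = 2
      consider "\<iota> i < \<iota> i'" | "\<iota> i' < \<iota> i" | "\<iota> i = \<iota> i'" by linarith
      then show ?thesis
      proof cases
        case 1 then show ?thesis using H by fastforce
      next
        case 2 then show ?thesis using H by fastforce
      next
        case 3 then have "i = i'" using inj by (simp add: inj_eq)
        then show ?thesis using H by simp
      qed
    qed simp
  qed
  show "lexle \<iota> a b \<and> lexle \<iota> b c \<Longrightarrow> lexle \<iota> a c"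
  proof -
    assume H: "lexle \<iota> a b \<and> lexle \<iota> b c"
    show "lexle \<iota> a c"
    proof (cases "a = b \<or> b = c")
      case True then show ?thesis using H by auto
    next
      case False
      then obtain i i' where ab: "Poly_Mapping.lookup a i < Poly_Mapping.lookup b i"
        "\<forall>j. \<iota> j < \<iota> i \<longrightarrow> Poly_Mapping.lookup a j = Poly_Mapping.lookup b j"
        and bc: "Poly_Mapping.lookup b i' < Poly_Mapping.lookup c i'"
        "\<forall>j. \<iota> j < \<iota> i' \<longrightarrow> Poly_Mapping.lookup b j = Poly_Mapping.lookup c j"
        using H unfolding lexle_def by blast
      consider "\<iota> i < \<iota> i'" | "\<iota> i' < \<iota> i" | "\<iota> i = \<iota> i'" by linarith
      then show ?thesis
      proof cases
        case 1
        then have "Poly_Mapping.lookup a i < Poly_Mapping.lookup c i" "\<forall>j. \<iota> j < \<iota> i \<longrightarrow> Poly_Mapping.lookup a j = Poly_Mapping.lookup c j"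
          using ab bc by auto
        then show ?thesis unfolding lexle_def by blast
      next
        case 2
        then have "Poly_Mapping.lookup a i' < Poly_Mapping.lookup c i'" "\<forall>j. \<iota> j < \<iota> i' \<longrightarrow> Poly_Mapping.lookup a j = Poly_Mapping.lookup c j"
          using ab bc by auto
        then show ?thesis unfolding lexle_def by blast
      next
        case 3 then have "i = i'" using inj by (simp add: inj_eq)
        then have "Poly_Mapping.lookup a i < Poly_Mapping.lookup c i" "\<forall>j. \<iota> j < \<iota> i \<longrightarrow> Poly_Mapping.lookup a j = Poly_Mapping.lookup c j"
          using ab bc by auto
        then show ?thesis unfolding lexle_def by blast
      qed
    qed
  qed
  show "lexle \<iota> a b \<or> lexle \<iota> b a"
  proof (cases "a = b")
    case True then show ?thesis unfolding lexle_def by simp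
  next
    case False
    then obtain i where i: "Poly_Mapping.lookup a i \<noteq> Poly_Mapping.lookup b i"
      "\<forall>j. \<iota> j < \<iota> i \<longrightarrow> Poly_Mapping.lookup a j = Poly_Mapping.lookup b j"
      using lex_first_diff by blast
    show ?thesis
    proof (cases "Poly_Mapping.lookup a i < Poly_Mapping.lookup b i")
      case True then show ?thesis using i unfolding lexle_def by blast
    next
      case False
      then have "Poly_Mapping.lookup b i < Poly_Mapping.lookup a i" using i(1) by simp
      then show ?thesis using i(2) unfolding lexle_def by metis
    qed
  qed
  show "lexle \<iota> 0 a"
  proof (cases "a = 0")
    case True then show ?thesis unfolding lexle_def by simp
  next
    case False
    then obtain i where i: "Poly_Mapping.lookup 0 i \<noteq> Poly_Mapping.lookup a i"
      "\<forall>j. \<iota> j < \<iota> i \<longrightarrow> Poly_Mapping.lookup 0 j = Poly_Mapping.lookup a j"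
      using lex_first_diff[of 0 a] by metis
    then show ?thesis unfolding lexle_def by (metis lookup_zero neq0_conv)
  qed
  show "lexle \<iota> a b \<Longrightarrow> lexle \<iota> (a + c) (b + c)"
    unfolding lexle_def by (auto simp: lookup_add)
qed

lemma ex_term_order: "\<exists>\<tau> :: ('n::finite) monom \<Rightarrow> 'n monom \<Rightarrow> bool. term_order \<tau>"
proof -
  obtain \<iota> :: "'n \<Rightarrow> nat" and n where "inj_on \<iota> UNIV"
    using finite_imp_inj_to_nat_seg[of "UNIV :: 'n set"] by auto
  then show ?thesis using lexle_term_order by blast
qed

definition wref :: "('a \<Rightarrow> real) \<Rightarrow> ('a \<Rightarrow> 'a \<Rightarrow> bool) \<Rightarrow> 'a \<Rightarrow> 'a \<Rightarrow> bool" where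
  "wref V le a b \<longleftrightarrow> V a < V b \<or> (V a = V b \<and> le a b)"

lemma ordw_wref: "ordw le w = wref (wt w) le"
  unfolding ordw_def wref_def by (intro ext) simp

lemma lin_wref:
  assumes L: "lin le"
  shows "lin (wref V le)"
proof -
  have r: "le a a" and an: "le a b \<Longrightarrow> le b a \<Longrightarrow> a = b" and tr: "le a b \<Longrightarrow> le b c \<Longrightarrow> le a c"
    and tot: "le a b \<or> le b a" for a b c using L unfolding lin_def by blast+
  show ?thesis unfolding lin_def wref_def
  proof (intro conjI allI impI)
    fix a b c
    show "V a < V a \<or> V a = V a \<and> le a a" using r by simp
    show "(V a < V b \<or> V a = V b \<and> le a b) \<and> (V b < V a \<or> V b = V a \<and> le b a) \<Longrightarrow> a = b"
      using an by auto
    show "(V a < V b \<or> V a = V b \<and> le a b) \<and> (V b < V c \<or> V b = V c \<and> le b c) \<Longrightarrow>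
       V a < V c \<or> V a = V c \<and> le a c"
      using tr by auto
    show "(V a < V b \<or> V a = V b \<and> le a b) \<or> (V b < V a \<or> V b = V a \<and> le b a)"
      using tot by auto
  qed
qed

lemma wref_term_order:
  assumes to: "term_order le" and add: "\<And>a b. V (a + b) = V a + V b" and pos: "\<And>a. V a \<ge> 0"
  shows "term_order (wref V le)"
proof -
  have L: "lin le" using to by (rule term_order_lin)
  have V0: "V 0 = 0" using add[of 0 0] by simp
  have z: "le 0 a" and c: "le a b \<Longrightarrow> le (a + cc) (b + cc)" for a b cc using to unfolding term_order_def by blast+
  have LW: "lin (wref V le)" using L by (rule lin_wref)
  have "(\<forall>a. wref V le a a) \<and> (\<forall>a b. wref V le a b \<and> wref V le b a \<longrightarrow> a = b) \<and>
     (\<forall>a b c. wref V le a b \<and> wref V le b c \<longrightarrow> wref V le a c) \<and> (\<forall>a b. wref V le a b \<or> wref V le b a)"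
    using LW unfolding lin_def .
  moreover have "\<forall>a. wref V le 0 a" unfolding wref_def using V0 pos z by (metis order_le_less)
  moreover have "\<forall>a b cc. wref V le a b \<longrightarrow> wref V le (a + cc) (b + cc)"
    unfolding wref_def using add c by auto
  ultimately show ?thesis unfolding term_order_def by blast
qed


definition Wv :: "real ^ ('n::finite) \<Rightarrow> 'n monom \<Rightarrow> real" where
  "Wv v a = wt v a + (\<Sum>i\<in>UNIV. \<bar>v $ i\<bar>) * real (monom_deg a)"

lemma Wv_add: "Wv v (a + b) = Wv v a + Wv v b"
  unfolding Wv_def by (simp add: wt_add monom_deg_add distrib_left)

lemma Wv_nonneg:
  fixes v :: "real ^ ('n::finite)" and a :: "'n monom"
  shows "Wv v a \<ge> 0"
proof -
  define C where "C = (\<Sum>i\<in>UNIV. \<bar>v $ i\<bar>)"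
  have "Wv v a = (\<Sum>i\<in>UNIV. (v $ i + C) * real (Poly_Mapping.lookup a i))"
    unfolding Wv_def wt_def monom_deg_def C_def[symmetric]
    by (simp add: distrib_right sum.distrib sum_distrib_left)
  also have "\<dots> \<ge> 0"
  proof (rule sum_nonneg)
    fix i :: 'n
    have "\<bar>v $ i\<bar> \<le> C" unfolding C_def by (rule member_le_sum) auto
    then have "v $ i + C \<ge> 0" by linarith
    then show "(v $ i + C) * real (Poly_Mapping.lookup a i) \<ge> 0" by simp
  qed
  finally show ?thesis .
qed

lemma Tv_term_order: "term_order \<tau> \<Longrightarrow> term_order (wref (Wv v) \<tau>)"
  by (rule wref_term_order) (auto simp: Wv_add Wv_nonneg)

lemma Tv_deg: "monom_deg a = monom_deg b \<Longrightarrow> wref (Wv v) \<tau> a b = ordw \<tau> v a b"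
  unfolding wref_def ordw_def Wv_def by auto

lemma lead_Tv:
  assumes "lin \<tau>" "homog e f" "f \<noteq> 0"
  shows "lds (wref (Wv v) \<tau>) (Poly_Mapping.keys f) = lds (ordw \<tau> v) (Poly_Mapping.keys f)"
proof (rule lds_cong)
  show "lin (wref (Wv v) \<tau>)" using assms(1) by (rule lin_wref)
  show "lin (ordw \<tau> v)" using assms(1) by (rule lin_ordw)
  show "finite (Poly_Mapping.keys f)" by simp
  show "Poly_Mapping.keys f \<noteq> {}" using assms(3) by (simp add: keys_empty_iff)
  fix a b assume "a \<in> Poly_Mapping.keys f" "b \<in> Poly_Mapping.keys f"
  then have "monom_deg a = monom_deg b" using assms(2) unfolding homog_def by auto
  then show "wref (Wv v) \<tau> a b = ordw \<tau> v a b" by (rule Tv_deg)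
qed

lemma wcomp_minus: "wcomp w t (a - b) = wcomp w t a - wcomp w t (b :: ('n::finite, 'k::field) mpoly)"
  unfolding wcomp_def by (rule rst_minus)

lemma keys_diff_smult:
  fixes f H :: "('n::finite, 'k::field) mpoly"
  shows "Poly_Mapping.keys (f - Poly_Mapping.single 0 c * H) \<subseteq> Poly_Mapping.keys f \<union> Poly_Mapping.keys H"
  by (auto simp: in_keys_iff lookup_minus lookup_smult)

lemma GEN:
  fixes I :: "('n::finite, 'k::field) mpoly set" and Tgt :: "('n, 'k) mpoly set"
  assumes idI: "is_ideal I" and L: "lin Od" and idT: "is_ideal Tgt"
    and Ow: "\<And>a b. monom_deg a = e \<Longrightarrow> monom_deg b = e \<Longrightarrow> Od a b \<Longrightarrow> wt v a \<le> wt v b"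
    and step: "\<And>f. f \<in> I \<Longrightarrow> homog e f \<Longrightarrow> f \<noteq> 0 \<Longrightarrow>
        \<exists>H\<in>I. homog e H \<and> H \<noteq> 0 \<and> lds Od (Poly_Mapping.keys H) = lds Od (Poly_Mapping.keys f) \<and> init_form v H \<in> Tgt"
  shows "f \<in> I \<Longrightarrow> homog e f \<Longrightarrow> init_form v f \<in> Tgt"
proof -
  define \<mu> where "\<mu> f = card {m. monom_deg m = e \<and> Od m (lds Od (Poly_Mapping.keys f)) \<and> m \<noteq> lds Od (Poly_Mapping.keys f)}"
    for f :: "('n, 'k) mpoly"
  have main: "\<forall>f. f \<in> I \<longrightarrow> homog e f \<longrightarrow> \<mu> f = n \<longrightarrow> init_form v f \<in> Tgt" for n
  proof (induction n rule: less_induct)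
    case (less n)
    show ?case
    proof (intro allI impI)
      fix f assume fI: "f \<in> I" and hf: "homog e f" and mf: "\<mu> f = n"
      show "init_form v f \<in> Tgt"
      proof (cases "f = 0")
        case True then show ?thesis using idT by (simp add: init_form_rst ideal_zero)
      next
        case fnz: False
        define a where "a = lds Od (Poly_Mapping.keys f)"
        have a: "a \<in> Poly_Mapping.keys f" "\<And>m. m \<in> Poly_Mapping.keys f \<Longrightarrow> Od m a"
          using lds_keys[OF L fnz] unfolding a_def by auto
        have dega: "monom_deg a = e" using a(1) hf unfolding homog_def by blast
        obtain H where H: "H \<in> I" "homog e H" "H \<noteq> 0" "lds Od (Poly_Mapping.keys H) = a" "init_form v H \<in> Tgt"
          using step[OF fI hf fnz] unfolding a_def by blast
        have aH: "a \<in> Poly_Mapping.keys H" "\<And>m. m \<in> Poly_Mapping.keys H \<Longrightarrow> Od m a"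
          using lds_keys[OF L H(3)] H(4) by auto
        define t where "t = wt v a"
        have wf: "wt v m \<le> t" if "m \<in> Poly_Mapping.keys f" for m
          using Ow[OF _ dega a(2)[OF that]] that hf unfolding homog_def t_def by blast
        have wH: "wt v m \<le> t" if "m \<in> Poly_Mapping.keys H" for m
          using Ow[OF _ dega aH(2)[OF that]] that H(2) unfolding homog_def t_def by blast
        have inf: "init_form v f = wcomp v t f"
          using wf a(1) by (intro init_form_wcomp_gen) (auto simp: t_def)
        have inH: "init_form v H = wcomp v t H"
          using wH aH(1) by (intro init_form_wcomp_gen) (auto simp: t_def)
        define \<gamma> where "\<gamma> = Poly_Mapping.lookup f a / Poly_Mapping.lookup H a"
        define F where "F = f - Poly_Mapping.single 0 \<gamma> * H"
        have FI: "F \<in> I" unfolding F_def using idI fI H(1) by (rule ideal_diff_smult)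
        have kF: "Poly_Mapping.keys F \<subseteq> Poly_Mapping.keys f \<union> Poly_Mapping.keys H"
          unfolding F_def by (rule keys_diff_smult)
        have hF: "homog e F" using kF hf H(2) unfolding homog_def by blast
        have Ha: "Poly_Mapping.lookup H a \<noteq> 0" using aH(1) by (simp add: in_keys_iff)
        have Fa: "Poly_Mapping.lookup F a = 0"
          unfolding F_def \<gamma>_def using Ha by (simp add: lookup_minus lookup_smult)
        have wcF: "wcomp v t F = init_form v f - Poly_Mapping.single 0 \<gamma> * init_form v H"
          unfolding F_def inf inH by (simp add: wcomp_minus wcomp_single_mult)
        have dec: "init_form v f = Poly_Mapping.single 0 \<gamma> * init_form v H + wcomp v t F"
          using wcF by simp
        have p1: "Poly_Mapping.single 0 \<gamma> * init_form v H \<in> Tgt" using idT H(5) by (rule ideal_mult)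
        have p2: "wcomp v t F \<in> Tgt"
        proof (cases "wcomp v t F = 0")
          case True then show ?thesis using idT by (simp add: ideal_zero)
        next
          case False
          then obtain m0 where m0: "m0 \<in> Poly_Mapping.keys (wcomp v t F)"
            by (metis keys_empty_iff ex_in_conv)
          have Fnz: "F \<noteq> 0" using False by auto
          have wF: "wt v m \<le> t" if "m \<in> Poly_Mapping.keys F" for m
            using that kF wf wH by blast
          have inF: "init_form v F = wcomp v t F"
            using m0 wF by (intro init_form_wcomp_gen[of _ _ _ m0]) (auto simp: keys_wcomp)
          define b where "b = lds Od (Poly_Mapping.keys F)"
          have b: "b \<in> Poly_Mapping.keys F" using lds_keys[OF L Fnz] unfolding b_def by auto
          have Oba: "Od b a" using b kF a(2) aH(2) by blast
          have bna: "b \<noteq> a" using b Fa by (auto simp: in_keys_iff)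
          have degb: "monom_deg b = e" using b hF unfolding homog_def by blast
          have sub: "{m. monom_deg m = e \<and> Od m b \<and> m \<noteq> b} \<subset> {m. monom_deg m = e \<and> Od m a \<and> m \<noteq> a}"
          proof
            show "{m. monom_deg m = e \<and> Od m b \<and> m \<noteq> b} \<subseteq> {m. monom_deg m = e \<and> Od m a \<and> m \<noteq> a}"
              using bna by (auto intro: lin_trans[OF L _ Oba] dest: lin_antisym[OF L Oba])
            show "{m. monom_deg m = e \<and> Od m b \<and> m \<noteq> b} \<noteq> {m. monom_deg m = e \<and> Od m a \<and> m \<noteq> a}"
              using degb Oba bna by blast
          qed
          have "\<mu> F < \<mu> f"
            unfolding \<mu>_def b_def[symmetric] a_def[symmetric]
            by (rule psubset_card_mono[OF finite_subset[OF _ finite_deg[of e]] sub]) blast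
          then have "init_form v F \<in> Tgt" using less.IH mf FI hF by blast
          then show ?thesis using inF by simp
        qed
        show ?thesis using dec p1 p2 idT by (simp add: ideal_add)
      qed
    qed
  qed
  then show "f \<in> I \<Longrightarrow> homog e f \<Longrightarrow> init_form v f \<in> Tgt" by blast
qed


section \<open>Initial ideals are generated in degrees at most d\<close>

lemma hcomp_decomp: "p = (\<Sum>e\<in>monom_deg ` Poly_Mapping.keys p. hcomp e p)"
proof (rule poly_mapping_eqI)
  fix x
  have "Poly_Mapping.lookup (\<Sum>e\<in>monom_deg ` Poly_Mapping.keys p. hcomp e p) x
      = (\<Sum>e\<in>monom_deg ` Poly_Mapping.keys p. if monom_deg x = e then Poly_Mapping.lookup p x else 0)"
    by (simp add: lookup_sum hcomp_rst)
  also have "\<dots> = (if monom_deg x \<in> monom_deg ` Poly_Mapping.keys p then Poly_Mapping.lookup p x else 0)"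
    by (rule sum.delta') simp
  also have "\<dots> = Poly_Mapping.lookup p x"
    by (auto simp: in_keys_iff)
  finally show "Poly_Mapping.lookup p x = Poly_Mapping.lookup (\<Sum>e\<in>monom_deg ` Poly_Mapping.keys p. hcomp e p) x"
    by simp
qed

lemma hcomp_wcomp: "hcomp e (wcomp w t f) = wcomp w t (hcomp e f)"
  by (rule poly_mapping_eqI) (simp add: hcomp_rst wcomp_def)

lemma hcomp_init_form:
  assumes "hcomp e (init_form w f) \<noteq> 0"
  shows "hcomp e (init_form w f) = init_form w (hcomp e f)"
proof -
  have fnz: "f \<noteq> 0" using assms by (auto simp: init_form_rst hcomp_rst)
  define t where "t = mw w f"
  have eq: "hcomp e (init_form w f) = wcomp w t (hcomp e f)"
    unfolding t_def init_form_wcomp[of w f] by (rule hcomp_wcomp)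
  obtain m0 where m0: "m0 \<in> Poly_Mapping.keys (wcomp w t (hcomp e f))"
    using assms eq by (metis keys_empty_iff ex_in_conv)
  have "init_form w (hcomp e f) = wcomp w t (hcomp e f)"
  proof (rule init_form_wcomp_gen[of _ _ _ m0])
    show "\<And>m. m \<in> Poly_Mapping.keys (hcomp e f) \<Longrightarrow> wt w m \<le> t"
      unfolding t_def using mw_props(2)[OF fnz, where w=w] by (auto simp: keys_hcomp)
    show "m0 \<in> Poly_Mapping.keys (hcomp e f)" "wt w m0 = t" using m0 by (auto simp: keys_wcomp)
  qed
  then show ?thesis using eq by simp
qed

lemma gen_le_d:
  fixes I :: "('n::finite, 'k::field) mpoly set"
  assumes hI: "homogeneous_ideal I"
    and h3: "\<forall>J\<in>monomial_initial_ideals I. generated_in_degrees_le J d"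
  shows "init_ideal v I \<subseteq> ideal_gen {init_form v f | f. f \<in> I \<and> (\<exists>e\<le>d. homog e f)}"
proof -
  have idI: "is_ideal I" using hI by (rule homogeneous_ideal_is_ideal)
  obtain \<tau> :: "'n monom \<Rightarrow> 'n monom \<Rightarrow> bool" where \<tau>: "term_order \<tau>" using ex_term_order by blast
  have L\<tau>: "lin \<tau>" using \<tau> by (rule term_order_lin)
  define T where "T = wref (Wv v) \<tau>"
  have TT: "term_order T" unfolding T_def using \<tau> by (rule Tv_term_order)
  have LT: "lin T" using TT by (rule term_order_lin)
  have Tc: "T a b \<Longrightarrow> T (a + c) (b + c)" for a b c using TT unfolding term_order_def by blast
  define K where "K = ideal_gen {init_form v f | f. f \<in> I \<and> (\<exists>e\<le>d. homog e f)}"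
  have idK: "is_ideal K" unfolding K_def by (rule ideal_gen_ideal)
  have homog_case: "init_form v f \<in> K" if fI: "f \<in> I" and hf: "homog e f" for e f
  proof (rule GEN[OF idI lin_ordw[OF L\<tau>] idK _ _ fI hf])
    show "\<And>a b. ordw \<tau> v a b \<Longrightarrow> wt v a \<le> wt v b" by (rule ordw_wt)
    fix f assume fI: "f \<in> I" and hf: "homog e f" and fnz: "f \<noteq> 0"
    define a where "a = lds (ordw \<tau> v) (Poly_Mapping.keys f)"
    have aT: "lead_mon T f = a" unfolding a_def T_def lead_mon_lds using lead_Tv[OF L\<tau> hf fnz] .
    have af: "a \<in> Poly_Mapping.keys f" using lds_keys[OF lin_ordw[OF L\<tau>] fnz] unfolding a_def by auto
    have dega: "monom_deg a = e" using af hf unfolding homog_def by blast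
    define M where "M = init_ideal_to T I"
    have "M \<in> monomial_initial_ideals I" unfolding M_def monomial_initial_ideals_def using TT by blast
    then have gM: "M = ideal_gen {q \<in> M. deg_le q d}" using h3 unfolding generated_in_degrees_le_def by blast
    have sa: "Poly_Mapping.single a 1 \<in> M"
      unfolding M_def init_ideal_to_def using fI fnz aT by (intro subsetD[OF ideal_gen_sub]) blast
    define Bs where "Bs = {b. \<exists>q. q \<in> M \<and> deg_le q d \<and> b \<in> Poly_Mapping.keys q}"
    have "Poly_Mapping.keys (Poly_Mapping.single a (1::'k)) \<subseteq> {b + c | b c. b \<in> Bs}"
    proof (rule ideal_gen_keys_upward[where S="{q \<in> M. deg_le q d}"])
      show "\<And>b c. b \<in> {b + c |b c. b \<in> Bs} \<Longrightarrow> b + c \<in> {b + c |b c. b \<in> Bs}"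
        by (auto simp: add.assoc) (metis add.assoc)
      show "\<And>s. s \<in> {q \<in> M. deg_le q d} \<Longrightarrow> Poly_Mapping.keys s \<subseteq> {b + c |b c. b \<in> Bs}"
        unfolding Bs_def by force
      show "Poly_Mapping.single a 1 \<in> ideal_gen {q \<in> M. deg_le q d}" using sa gM by simp
    qed
    then obtain b c q where bc: "a = b + c" "q \<in> M" "deg_le q d" "b \<in> Poly_Mapping.keys q"
      unfolding Bs_def by auto
    define As where "As = {lead_mon T f | f. f \<in> I \<and> f \<noteq> 0}"
    have "Poly_Mapping.keys q \<subseteq> {a' + c | a' c. a' \<in> As}"
    proof (rule ideal_gen_keys_upward[where S="{Poly_Mapping.single (lead_mon T f) 1 | f. f \<in> I \<and> f \<noteq> 0}"])
      show "\<And>b c. b \<in> {a' + c |a' c. a' \<in> As} \<Longrightarrow> b + c \<in> {a' + c |a' c. a' \<in> As}"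
        by (auto simp: add.assoc) (metis add.assoc)
      show "\<And>s. s \<in> {Poly_Mapping.single (lead_mon T f) (1::'k) |f. f \<in> I \<and> f \<noteq> 0} \<Longrightarrow> Poly_Mapping.keys s \<subseteq> {a' + c |a' c. a' \<in> As}"
        unfolding As_def by force
      show "q \<in> ideal_gen {Poly_Mapping.single (lead_mon T f) 1 |f. f \<in> I \<and> f \<noteq> 0}"
        using bc(2) unfolding M_def init_ideal_to_def .
    qed
    then obtain a' c' f' where ac: "b = a' + c'" "a' = lead_mon T f'" "f' \<in> I" "f' \<noteq> 0"
      using bc(4) unfolding As_def by blast
    have degb: "monom_deg b \<le> d" using bc(3,4) unfolding deg_le_def mon_def by blast
    define e' where "e' = monom_deg a'"
    have e'd: "e' \<le> d" using degb unfolding ac(1) e'_def monom_deg_add by simp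
    define f'' where "f'' = hcomp e' f'"
    have f''I: "f'' \<in> I" unfolding f''_def using hI ac(3) by (rule hcomp_in)
    have hf'': "homog e' f''" unfolding f''_def by (rule homog_hcomp)
    have a'f': "a' \<in> Poly_Mapping.keys f'" "\<And>m. m \<in> Poly_Mapping.keys f' \<Longrightarrow> T m a'"
      using lds_keys[OF LT ac(4)] unfolding ac(2) lead_mon_lds by auto
    have a'f'': "a' \<in> Poly_Mapping.keys f''" using a'f'(1) unfolding f''_def keys_hcomp e'_def by simp
    have Tf'': "\<And>m. m \<in> Poly_Mapping.keys f'' \<Longrightarrow> T m a'" using a'f'(2) unfolding f''_def keys_hcomp by simp
    define cc where "cc = c' + c"
    have acc: "a = cc + a'" unfolding cc_def bc(1) ac(1) by (simp add: add_ac)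
    define H where "H = Poly_Mapping.single cc (1::'k) * f''"
    have HI: "H \<in> I" unfolding H_def using idI f''I by (rule ideal_mult)
    have kH: "Poly_Mapping.keys H = (\<lambda>k. cc + k) ` Poly_Mapping.keys f''"
      unfolding H_def by (rule keys_single_mult) simp
    have hH: "homog e H"
      unfolding homog_def kH using hf'' dega acc e'_def by (auto simp: homog_def monom_deg_add)
    have aH: "a \<in> Poly_Mapping.keys H" unfolding kH acc using a'f'' by blast
    then have Hnz: "H \<noteq> 0" by auto
    have "lds T (Poly_Mapping.keys H) = a"
    proof (rule lds_unique[OF LT aH])
      fix m assume "m \<in> Poly_Mapping.keys H"
      then obtain k where k: "m = cc + k" "k \<in> Poly_Mapping.keys f''" unfolding kH by blast
      show "T m a" unfolding k(1) acc using Tc[OF Tf''[OF k(2)], of cc] by (simp add: add.commute)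
    qed
    then have leadH: "lds (ordw \<tau> v) (Poly_Mapping.keys H) = a"
      using lead_Tv[OF L\<tau> hH Hnz, of v] unfolding T_def by simp
    have "init_form v f'' \<in> K"
      unfolding K_def using f''I hf'' e'd by (intro subsetD[OF ideal_gen_sub]) blast
    then have "init_form v H \<in> K"
      unfolding H_def init_form_single_mult[OF one_neq_zero] by (rule ideal_mult[OF idK])
    then show "\<exists>H\<in>I. homog e H \<and> H \<noteq> 0 \<and> lds (ordw \<tau> v) (Poly_Mapping.keys H) = lds (ordw \<tau> v) (Poly_Mapping.keys f) \<and> init_form v H \<in> K"
      using HI hH Hnz leadH unfolding a_def by blast
  qed
  have "init_form v f \<in> K" if fI: "f \<in> I" for f
  proof -
    have "init_form v f = (\<Sum>e\<in>monom_deg ` Poly_Mapping.keys (init_form v f). hcomp e (init_form v f))"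
      by (rule hcomp_decomp)
    also have "\<dots> \<in> K"
    proof (rule ideal_sum[OF idK], simp)
      fix e
      show "hcomp e (init_form v f) \<in> K"
      proof (cases "hcomp e (init_form v f) = 0")
        case True then show ?thesis using idK by (simp add: ideal_zero)
      next
        case False
        then have "hcomp e (init_form v f) = init_form v (hcomp e f)" by (rule hcomp_init_form)
        moreover have "init_form v (hcomp e f) \<in> K"
          using homog_case[OF hcomp_in[OF hI fI] homog_hcomp] .
        ultimately show ?thesis by simp
      qed
    qed
    finally show ?thesis .
  qed
  then show ?thesis unfolding init_ideal_def K_def[symmetric] using ideal_gen_min[OF idK] by blast
qed


section \<open>The permutation action\<close>

lemma lookup_map_key: "inj f \<Longrightarrow> Poly_Mapping.lookup (Poly_Mapping.map_key f p) x = Poly_Mapping.lookup p (f x)"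
  by (simp add: Poly_Mapping.map_key.rep_eq)

lemma lookup_act_mon: "bij g \<Longrightarrow> Poly_Mapping.lookup (act_mon g a) i = Poly_Mapping.lookup a (inv g i)"
  unfolding act_mon_def by (simp add: lookup_map_key bij_is_inj bij_imp_bij_inv)

lemma act_mon_inv_cancel:
  assumes "bij g"
  shows "act_mon (inv g) (act_mon g a) = a" "act_mon g (act_mon (inv g) a) = a"
proof -
  have bi: "bij (inv g)" using assms by (rule bij_imp_bij_inv)
  show "act_mon (inv g) (act_mon g a) = a"
    by (rule poly_mapping_eqI) (simp add: lookup_act_mon assms bi inv_inv_eq inv_f_f bij_is_inj)
  show "act_mon g (act_mon (inv g) a) = a"
    by (rule poly_mapping_eqI) (simp add: lookup_act_mon assms bi inv_inv_eq surj_f_inv_f bij_is_surj)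
qed

lemma inj_act_mon: "bij g \<Longrightarrow> inj (act_mon g)"
  by (metis act_mon_inv_cancel(1) injI)

lemma wt_act_mon:
  assumes "bij g"
  shows "wt (act_wt (inv g) w) (act_mon g a) = wt w a"
proof -
  have bi: "bij (inv g)" using assms by (rule bij_imp_bij_inv)
  have "wt (act_wt (inv g) w) (act_mon g a) = (\<Sum>i\<in>UNIV. w $ inv g i * real (Poly_Mapping.lookup a (inv g i)))"
    unfolding wt_def act_wt_def by (simp add: lookup_act_mon assms)
  also have "\<dots> = (\<Sum>i\<in>UNIV. w $ i * real (Poly_Mapping.lookup a i))"
    using sum.reindex_bij_betw[of "inv g" UNIV UNIV "\<lambda>i. w $ i * real (Poly_Mapping.lookup a i)"] bi
    by simp
  finally show ?thesis unfolding wt_def .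
qed

lemma deg_act_mon:
  assumes "bij g"
  shows "monom_deg (act_mon g a) = monom_deg a"
proof -
  have bi: "bij (inv g)" using assms by (rule bij_imp_bij_inv)
  have "monom_deg (act_mon g a) = (\<Sum>i\<in>UNIV. Poly_Mapping.lookup a (inv g i))"
    unfolding monom_deg_def by (simp add: lookup_act_mon assms)
  also have "\<dots> = monom_deg a"
    unfolding monom_deg_def
    using sum.reindex_bij_betw[of "inv g" UNIV UNIV "\<lambda>i. Poly_Mapping.lookup a i"] bi by simp
  finally show ?thesis .
qed

lemma mon_act_poly:
  assumes "bij g"
  shows "mon (act_poly g f) = act_mon g ` Poly_Mapping.keys f"
proof -
  have bi: "bij (inv g)" using assms by (rule bij_imp_bij_inv)
  have "mon (act_poly g f) = act_mon (inv g) -` Poly_Mapping.keys f"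
    unfolding mon_def act_poly_def by (rule keys_map_key[OF inj_act_mon[OF bi]])
  also have "\<dots> = act_mon g ` Poly_Mapping.keys f"
    using act_mon_inv_cancel[OF assms] by (auto simp: image_iff) (metis)
  finally show ?thesis .
qed

lemma perm_group_bij: "perm_group G \<Longrightarrow> g \<in> G \<Longrightarrow> bij g"
  unfolding perm_group_def by blast

lemma perm_group_inv: "perm_group G \<Longrightarrow> g \<in> G \<Longrightarrow> inv g \<in> G"
  unfolding perm_group_def by blast

lemma monomial_act:
  fixes I :: "('n::finite, 'k::field) mpoly set"
  assumes pG: "perm_group G" and h4: "acts_monomially_upto G I d" and gG: "g \<in> G"
    and fI: "f \<in> I" and hf: "homog e f" and ed: "e \<le> d"
  shows "\<exists>h\<in>I. Poly_Mapping.keys h = act_mon g ` Poly_Mapping.keys f \<and> homog e h"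
proof -
  have bg: "bij g" using pG gG by (rule perm_group_bij)
  have "deg_le f d" using hf ed unfolding deg_le_def homog_def mon_def by auto
  then obtain h where h: "h \<in> I" "mon h = mon (act_poly g f)" using h4 fI gG unfolding acts_monomially_upto_def by blast
  have kh: "Poly_Mapping.keys h = act_mon g ` Poly_Mapping.keys f" using h(2) mon_act_poly[OF bg] unfolding mon_def by simp
  have "homog e h" using hf deg_act_mon[OF bg] unfolding homog_def kh by auto
  then show ?thesis using h(1) kh by blast
qed

lemma act_wt_comp: "act_wt g (act_wt h w) = act_wt (h \<circ> g) w"
  unfolding act_wt_def by (simp add: vec_eq_iff)

lemma act_wt_id: "act_wt id w = w"
  unfolding act_wt_def by (simp add: vec_eq_iff)

lemma MX_image:
  assumes "\<And>a. wt v (\<phi> a) = wt w a"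
  shows "MX v (\<phi> ` S) = \<phi> ` MX w S"
  unfolding MX_def using assms by auto

lemma lead_in_MX:
  assumes "lin \<tau>" "f \<noteq> 0"
  shows "lds (ordw \<tau> w) (Poly_Mapping.keys f) \<in> MX w (Poly_Mapping.keys f)"
  using lds_keys[OF lin_ordw[OF assms(1)] assms(2)] ordw_wt unfolding MX_def by blast

lemma mu_less:
  assumes L: "lin Od" and degb: "monom_deg b = e" and Oba: "Od b a" and bna: "b \<noteq> a"
  shows "card {m. monom_deg m = e \<and> Od m b \<and> m \<noteq> b} < card {m. monom_deg m = (e::nat) \<and> Od m a \<and> m \<noteq> (a::('n::finite) monom)}"
proof (rule psubset_card_mono)
  show "finite {m. monom_deg m = e \<and> Od m a \<and> m \<noteq> a}"
    by (rule finite_subset[OF _ finite_deg[of e]]) blast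
  show "{m. monom_deg m = e \<and> Od m b \<and> m \<noteq> b} \<subset> {m. monom_deg m = e \<and> Od m a \<and> m \<noteq> a}"
  proof
    show "{m. monom_deg m = e \<and> Od m b \<and> m \<noteq> b} \<subseteq> {m. monom_deg m = e \<and> Od m a \<and> m \<noteq> a}"
      using bna by (auto intro: lin_trans[OF L _ Oba] dest: lin_antisym[OF L Oba])
    show "{m. monom_deg m = e \<and> Od m b \<and> m \<noteq> b} \<noteq> {m. monom_deg m = e \<and> Od m a \<and> m \<noteq> a}"
      using degb Oba bna by blast
  qed
qed


section \<open>Reduced elements\<close>

lemma E1:
  fixes I :: "('n::finite, 'k::field) mpoly set"
  assumes idI: "is_ideal I" and L: "lin Od"
  shows "a \<in> {lds Od (Poly_Mapping.keys f) | f. f \<in> I \<and> homog e f \<and> f \<noteq> 0} \<Longrightarrow>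
    \<exists>r\<in>I. homog e r \<and> Poly_Mapping.lookup r a \<noteq> 0 \<and> (\<forall>m\<in>Poly_Mapping.keys r. Od m a) \<and>
      Poly_Mapping.keys r \<inter> {lds Od (Poly_Mapping.keys f) | f. f \<in> I \<and> homog e f \<and> f \<noteq> 0} \<subseteq> {a}"
proof -
  define LL where "LL = {lds Od (Poly_Mapping.keys f) | f. f \<in> I \<and> homog e f \<and> f \<noteq> 0}"
  have main: "\<forall>a. card {m. monom_deg m = e \<and> Od m a \<and> m \<noteq> a} = n \<longrightarrow> a \<in> LL \<longrightarrow>
    (\<exists>r\<in>I. homog e r \<and> Poly_Mapping.lookup r a \<noteq> 0 \<and> (\<forall>m\<in>Poly_Mapping.keys r. Od m a) \<and> Poly_Mapping.keys r \<inter> LL \<subseteq> {a})" for n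
  proof (induction n rule: less_induct)
    case (less n)
    show ?case
    proof (intro allI impI)
      fix a assume mu: "card {m. monom_deg m = e \<and> Od m a \<and> m \<noteq> a} = n" and aL: "a \<in> LL"
      obtain f0 where f0: "f0 \<in> I" "homog e f0" "f0 \<noteq> 0" "a = lds Od (Poly_Mapping.keys f0)"
        using aL unfolding LL_def by blast
      have af0: "a \<in> Poly_Mapping.keys f0" "\<And>m. m \<in> Poly_Mapping.keys f0 \<Longrightarrow> Od m a"
        using lds_keys[OF L f0(3)] f0(4) by auto
      define R where "R = {r. r \<in> I \<and> homog e r \<and> Poly_Mapping.lookup r a \<noteq> 0 \<and> (\<forall>m\<in>Poly_Mapping.keys r. Od m a)}"
      have "f0 \<in> R" unfolding R_def using f0 af0 by (auto simp: in_keys_iff)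
      from ex_has_least_nat[of "\<lambda>r. r \<in> R", OF this, of "\<lambda>r. card (Poly_Mapping.keys r \<inter> LL)"]
      obtain r where r: "r \<in> R" and rmin: "\<And>r'. r' \<in> R \<Longrightarrow> card (Poly_Mapping.keys r \<inter> LL) \<le> card (Poly_Mapping.keys r' \<inter> LL)"
        by blast
      have rI: "r \<in> I" and hr: "homog e r" and ra: "Poly_Mapping.lookup r a \<noteq> 0" and rle: "\<And>m. m \<in> Poly_Mapping.keys r \<Longrightarrow> Od m a"
        using r unfolding R_def by auto
      have "Poly_Mapping.keys r \<inter> LL \<subseteq> {a}"
      proof
        fix b assume bin: "b \<in> Poly_Mapping.keys r \<inter> LL"
        show "b \<in> {a}"
        proof (rule ccontr)
          assume "b \<notin> {a}"
          then have bna: "b \<noteq> a" by simp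
          have Oba: "Od b a" using bin rle by blast
          have degb: "monom_deg b = e" using bin hr unfolding homog_def by blast
          have "card {m. monom_deg m = e \<and> Od m b \<and> m \<noteq> b} < n"
            using mu_less[OF L degb Oba bna] mu by simp
          then obtain rb where rb: "rb \<in> I" "homog e rb" "Poly_Mapping.lookup rb b \<noteq> 0"
            "\<And>m. m \<in> Poly_Mapping.keys rb \<Longrightarrow> Od m b" "Poly_Mapping.keys rb \<inter> LL \<subseteq> {b}"
            using less.IH bin by blast
          define \<gamma> where "\<gamma> = Poly_Mapping.lookup r b / Poly_Mapping.lookup rb b"
          define r' where "r' = r - Poly_Mapping.single 0 \<gamma> * rb"
          have r'I: "r' \<in> I" unfolding r'_def using idI rI rb(1) by (rule ideal_diff_smult)
          have kr': "Poly_Mapping.keys r' \<subseteq> Poly_Mapping.keys r \<union> Poly_Mapping.keys rb"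
            unfolding r'_def by (rule keys_diff_smult)
          have hr': "homog e r'" using kr' hr rb(2) unfolding homog_def by blast
          have anrb: "a \<notin> Poly_Mapping.keys rb"
          proof
            assume "a \<in> Poly_Mapping.keys rb"
            then have "Od a b" by (rule rb(4))
            then have "a = b" using lin_antisym[OF L _ Oba] by blast
            then show False using bna by simp
          qed
          have r'a: "Poly_Mapping.lookup r' a \<noteq> 0"
            using ra anrb unfolding r'_def by (simp add: lookup_minus lookup_smult in_keys_iff)
          have r'b: "Poly_Mapping.lookup r' b = 0"
            using rb(3) unfolding r'_def \<gamma>_def by (simp add: lookup_minus lookup_smult)
          have r'le: "\<forall>m\<in>Poly_Mapping.keys r'. Od m a"
            using kr' rle rb(4) lin_trans[OF L _ Oba] by blast
          have r'R: "r' \<in> R" unfolding R_def using r'I hr' r'a r'le by blast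
          have sub: "Poly_Mapping.keys r' \<inter> LL \<subset> Poly_Mapping.keys r \<inter> LL"
          proof
            show "Poly_Mapping.keys r' \<inter> LL \<subseteq> Poly_Mapping.keys r \<inter> LL"
            proof
              fix m assume m: "m \<in> Poly_Mapping.keys r' \<inter> LL"
              then have mnb: "m \<noteq> b" using r'b by (auto simp: in_keys_iff)
              have "m \<notin> Poly_Mapping.keys rb" using m mnb rb(5) by blast
              then show "m \<in> Poly_Mapping.keys r \<inter> LL" using m kr' by blast
            qed
            show "Poly_Mapping.keys r' \<inter> LL \<noteq> Poly_Mapping.keys r \<inter> LL"
              using bin r'b by (auto simp: in_keys_iff)
          qed
          have "card (Poly_Mapping.keys r' \<inter> LL) < card (Poly_Mapping.keys r \<inter> LL)"
            by (rule psubset_card_mono[OF _ sub]) simp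
          then show False using rmin[OF r'R] by simp
        qed
      qed
      then show "\<exists>r\<in>I. homog e r \<and> Poly_Mapping.lookup r a \<noteq> 0 \<and> (\<forall>m\<in>Poly_Mapping.keys r. Od m a) \<and> Poly_Mapping.keys r \<inter> LL \<subseteq> {a}"
        using rI hr ra rle by blast
    qed
  qed
  then show "a \<in> {lds Od (Poly_Mapping.keys f) | f. f \<in> I \<and> homog e f \<and> f \<noteq> 0} \<Longrightarrow>
    \<exists>r\<in>I. homog e r \<and> Poly_Mapping.lookup r a \<noteq> 0 \<and> (\<forall>m\<in>Poly_Mapping.keys r. Od m a) \<and>
      Poly_Mapping.keys r \<inter> {lds Od (Poly_Mapping.keys f) | f. f \<in> I \<and> homog e f \<and> f \<noteq> 0} \<subseteq> {a}"
    unfolding LL_def[symmetric] by blast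
qed

lemma memL: "f \<in> I \<Longrightarrow> homog e f \<Longrightarrow> f \<noteq> 0 \<Longrightarrow> lds Od (Poly_Mapping.keys f) \<in> {lds Od (Poly_Mapping.keys f) | f. f \<in> I \<and> homog e f \<and> f \<noteq> 0}"
  by blast

lemma L_sub:
  fixes I :: "('n::finite, 'k::field) mpoly set"
  assumes hI: "homogeneous_ideal I" and L: "lin \<tau>" and eq: "init_ideal wa I = init_ideal wb I"
    and fI: "f \<in> I" and hf: "homog e f" and fnz: "f \<noteq> 0"
  shows "\<exists>f'\<in>I. homog e f' \<and> f' \<noteq> 0 \<and> lds (ordw \<tau> wb) (Poly_Mapping.keys f') = lds (ordw \<tau> wa) (Poly_Mapping.keys f)"
proof -
  have "init_form wa f \<in> init_ideal wa I" unfolding init_ideal_def using fI by (intro subsetD[OF ideal_gen_sub]) blast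
  then have h: "init_form wa f \<in> init_ideal wb I" using eq by simp
  have hh: "homog e (init_form wa f)" using hf keys_init_form_sub[of wa f] unfolding homog_def by blast
  have hnz: "init_form wa f \<noteq> 0" using fnz by (simp add: init_form_zero_iff)
  show ?thesis using FZ[OF hI L h hh hnz] lead_init_form[OF L fnz] by simp
qed


lemma CORE:
  fixes G :: "('n::finite \<Rightarrow> 'n) set" and I :: "('n, 'k::field) mpoly set"
  assumes pG: "perm_group G" and hI: "homogeneous_ideal I"
    and h3: "\<forall>J\<in>monomial_initial_ideals I. generated_in_degrees_le J d"
    and h4: "acts_monomially_upto G I d" and gG: "g \<in> G"
    and eqJ: "init_ideal w1 I = init_ideal w2 I"
  shows "init_ideal (act_wt (inv g) w1) I \<subseteq> init_ideal (act_wt (inv g) w2) I"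
proof -
  have idI: "is_ideal I" using hI by (rule homogeneous_ideal_is_ideal)
  have bg: "bij g" using pG gG by (rule perm_group_bij)
  have igG: "inv g \<in> G" using pG gG by (rule perm_group_inv)
  obtain \<tau> :: "'n monom \<Rightarrow> 'n monom \<Rightarrow> bool" where \<tau>: "term_order \<tau>" using ex_term_order by blast
  have L\<tau>: "lin \<tau>" using \<tau> by (rule term_order_lin)
  define v1 where "v1 = act_wt (inv g) w1"
  define v2 where "v2 = act_wt (inv g) w2"
  define \<phi> where "\<phi> = act_mon g"
  define \<psi> where "\<psi> = act_mon (inv g)"
  have \<psi>\<phi>: "\<psi> (\<phi> a) = a" and \<phi>\<psi>: "\<phi> (\<psi> a) = a" for a
    unfolding \<phi>_def \<psi>_def using act_mon_inv_cancel[OF bg] by auto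
  have w1\<phi>: "wt v1 (\<phi> a) = wt w1 a" and w2\<phi>: "wt v2 (\<phi> a) = wt w2 a" for a
    unfolding v1_def v2_def \<phi>_def using wt_act_mon[OF bg] by auto
  define \<sigma> where "\<sigma> a b = \<tau> (\<psi> a) (\<psi> b)" for a b
  have L\<sigma>: "lin \<sigma>"
    unfolding lin_def
  proof (intro conjI allI impI)
    fix a b c
    show "\<sigma> a a" unfolding \<sigma>_def by (rule lin_refl[OF L\<tau>])
    show "\<sigma> a b \<or> \<sigma> b a" unfolding \<sigma>_def by (rule lin_total[OF L\<tau>])
    show "\<sigma> a b \<and> \<sigma> b c \<Longrightarrow> \<sigma> a c" unfolding \<sigma>_def using lin_trans[OF L\<tau>] by blast
    assume "\<sigma> a b \<and> \<sigma> b a"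
    then have "\<psi> a = \<psi> b" unfolding \<sigma>_def using lin_antisym[OF L\<tau>] by blast
    then have "\<phi> (\<psi> a) = \<phi> (\<psi> b)" by simp
    then show "a = b" by (simp add: \<phi>\<psi>)
  qed
  have \<sigma>\<phi>: "\<sigma> (\<phi> a) (\<phi> b) = \<tau> a b" for a b unfolding \<sigma>_def \<psi>\<phi> ..
  define J2 where "J2 = init_ideal v2 I"
  have idJ2: "is_ideal J2" unfolding J2_def init_ideal_def by (rule ideal_gen_ideal)
  define O1 where "O1 = ordw \<tau> w1"
  define O2 where "O2 = ordw \<tau> w2"
  define O1' where "O1' = ordw \<sigma> v1"
  have LO1: "lin O1" unfolding O1_def using L\<tau> by (rule lin_ordw)
  have LO2: "lin O2" unfolding O2_def using L\<tau> by (rule lin_ordw)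
  have LO1': "lin O1'" unfolding O1'_def using L\<sigma> by (rule lin_ordw)
  have tr1: "O1' (\<phi> a) (\<phi> b) = O1 a b" for a b
    unfolding O1'_def O1_def ordw_def w1\<phi> \<sigma>\<phi> ..
  have tr1': "O1 (\<psi> a) (\<psi> b) = O1' a b" for a b
    using tr1[of "\<psi> a" "\<psi> b"] by (simp add: \<phi>\<psi>)
  have key: "init_form v1 f \<in> J2" if ed: "e \<le> d" and fI: "f \<in> I" and hf: "homog e f" for e f
  proof (rule GEN[OF idI LO1' idJ2 _ _ fI hf])
    show "\<And>a b. O1' a b \<Longrightarrow> wt v1 a \<le> wt v1 b" unfolding O1'_def by (rule ordw_wt)
    define L1 where "L1 = {lds O1 (Poly_Mapping.keys f) | f. f \<in> I \<and> homog e f \<and> f \<noteq> 0}"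
    define L2 where "L2 = {lds O2 (Poly_Mapping.keys f) | f. f \<in> I \<and> homog e f \<and> f \<noteq> 0}"
    have L12: "L1 = L2"
    proof
      show "L1 \<subseteq> L2"
      proof
        fix x assume "x \<in> L1"
        then obtain f where f: "f \<in> I" "homog e f" "f \<noteq> 0" "x = lds O1 (Poly_Mapping.keys f)" unfolding L1_def by blast
        obtain f' where f': "f' \<in> I" "homog e f'" "f' \<noteq> 0" "lds O2 (Poly_Mapping.keys f') = x"
          using L_sub[OF hI L\<tau> eqJ f(1-3)] f(4) unfolding O1_def O2_def by auto
        show "x \<in> L2" unfolding L2_def
          by (rule CollectI, rule exI[where x=f']) (use f' in auto)
      qed
      show "L2 \<subseteq> L1"
      proof
        fix x assume "x \<in> L2"
        then obtain f where f: "f \<in> I" "homog e f" "f \<noteq> 0" "x = lds O2 (Poly_Mapping.keys f)" unfolding L2_def by blast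
        obtain f' where f': "f' \<in> I" "homog e f'" "f' \<noteq> 0" "lds O1 (Poly_Mapping.keys f') = x"
          using L_sub[OF hI L\<tau> eqJ[symmetric] f(1-3)] f(4) unfolding O1_def O2_def by auto
        show "x \<in> L1" unfolding L1_def
          by (rule CollectI, rule exI[where x=f']) (use f' in auto)
      qed
    qed
    fix F assume FI: "F \<in> I" and hF: "homog e F" and Fnz: "F \<noteq> 0"
    define a' where "a' = lds O1' (Poly_Mapping.keys F)"
    obtain h0 where h0: "h0 \<in> I" "Poly_Mapping.keys h0 = \<psi> ` Poly_Mapping.keys F" "homog e h0"
      using monomial_act[OF pG h4 igG FI hF ed] unfolding \<psi>_def by blast
    have kF: "Poly_Mapping.keys F \<noteq> {}" using Fnz by (simp add: keys_empty_iff)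
    have h0nz: "h0 \<noteq> 0"
    proof
      assume "h0 = 0"
      then have "Poly_Mapping.keys h0 = {}" by simp
      then show False using h0(2) kF by simp
    qed
    have "lds O1 (Poly_Mapping.keys h0) = \<psi> a'"
      unfolding h0(2) a'_def by (rule lds_image[OF LO1' LO1 finite_keys kF]) (rule tr1')
    then have aL: "\<psi> a' \<in> L1" unfolding L1_def using memL[OF h0(1,3) h0nz, of O1] by simp
    define a where "a = \<psi> a'"
    obtain r where r: "r \<in> I" "homog e r" "Poly_Mapping.lookup r a \<noteq> 0" "Poly_Mapping.keys r \<inter> L1 \<subseteq> {a}"
      using E1[OF idI LO1, of a e] aL unfolding a_def L1_def by blast
    have ar: "a \<in> Poly_Mapping.keys r" using r(3) by (simp add: in_keys_iff)
    then have rnz: "r \<noteq> 0" by auto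
    have lead1: "lds O1 (Poly_Mapping.keys r) = a"
    proof -
      have "lds O1 (Poly_Mapping.keys r) \<in> L1" unfolding L1_def using r(1,2) rnz by (rule memL)
      moreover have "lds O1 (Poly_Mapping.keys r) \<in> Poly_Mapping.keys r" using lds_keys[OF LO1 rnz] by simp
      ultimately show ?thesis using r(4) by blast
    qed
    have lead2: "lds O2 (Poly_Mapping.keys r) = a"
    proof -
      have "lds O2 (Poly_Mapping.keys r) \<in> L1" unfolding L12 L2_def using r(1,2) rnz by (rule memL)
      moreover have "lds O2 (Poly_Mapping.keys r) \<in> Poly_Mapping.keys r" using lds_keys[OF LO2 rnz] by simp
      ultimately show ?thesis using r(4) by blast
    qed
    have aMX1: "a \<in> MX w1 (Poly_Mapping.keys r)" using lead_in_MX[OF L\<tau> rnz, of w1] lead1 unfolding O1_def by simp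
    have aMX2: "a \<in> MX w2 (Poly_Mapping.keys r)" using lead_in_MX[OF L\<tau> rnz, of w2] lead2 unfolding O2_def by simp
    have Dz: "init_form w1 r = init_form w2 r"
    proof (rule ccontr)
      assume ne: "init_form w1 r \<noteq> init_form w2 r"
      define D where "D = init_form w1 r - init_form w2 r"
      have Dnz: "D \<noteq> 0" unfolding D_def using ne by simp
      have i1: "init_form w1 r \<in> init_ideal w1 I" unfolding init_ideal_def using r(1) by (intro subsetD[OF ideal_gen_sub]) blast
      have i2': "init_form w2 r \<in> init_ideal w2 I" unfolding init_ideal_def using r(1) by (intro subsetD[OF ideal_gen_sub]) blast
      have i2: "init_form w2 r \<in> init_ideal w1 I" using i2' eqJ by simp
      have DJ: "D \<in> init_ideal w1 I" unfolding D_def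
        by (rule ideal_diff[OF _ i1 i2]) (simp add: init_ideal_def ideal_gen_ideal)
      have kD: "Poly_Mapping.keys D \<subseteq> Poly_Mapping.keys r"
        unfolding D_def using keys_init_form_sub[of w1 r] keys_init_form_sub[of w2 r] keys_minus_sub[of "init_form w1 r" "init_form w2 r"]
        by blast
      have hD: "homog e D" using kD r(2) unfolding homog_def by blast
      have Da: "Poly_Mapping.lookup D a = 0"
        unfolding D_def using aMX1 aMX2 by (simp add: lookup_minus lookup_init_form)
      obtain f'' where f'': "f'' \<in> I" "homog e f''" "f'' \<noteq> 0" "lds O1 (Poly_Mapping.keys f'') = lds \<tau> (Poly_Mapping.keys D)"
        using FZ[OF hI L\<tau> DJ hD Dnz] unfolding O1_def by blast
      have bL: "lds \<tau> (Poly_Mapping.keys D) \<in> L1" unfolding L1_def using memL[OF f''(1-3), of O1] f''(4) by simp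
      have bD: "lds \<tau> (Poly_Mapping.keys D) \<in> Poly_Mapping.keys D" using lds_keys[OF L\<tau> Dnz] by simp
      then have "lds \<tau> (Poly_Mapping.keys D) = a" using bL kD r(4) by blast
      then show False using bD Da by (simp add: in_keys_iff)
    qed
    have MXeq: "MX w1 (Poly_Mapping.keys r) = MX w2 (Poly_Mapping.keys r)"
      using arg_cong[OF Dz, of Poly_Mapping.keys] by (simp only: keys_init_form)
    obtain h where h: "h \<in> I" "Poly_Mapping.keys h = \<phi> ` Poly_Mapping.keys r" "homog e h"
      using monomial_act[OF pG h4 gG r(1,2) ed] unfolding \<phi>_def by blast
    have kr: "Poly_Mapping.keys r \<noteq> {}" using rnz by (simp add: keys_empty_iff)
    have hnz: "h \<noteq> 0"
    proof
      assume "h = 0"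
      then have "Poly_Mapping.keys h = {}" by simp
      then show False using h(2) kr by simp
    qed
    have "lds O1' (Poly_Mapping.keys h) = \<phi> (lds O1 (Poly_Mapping.keys r))"
      unfolding h(2) by (rule lds_image[OF LO1 LO1' finite_keys kr]) (rule tr1)
    then have leadh: "lds O1' (Poly_Mapping.keys h) = a'" using lead1 unfolding a_def by (simp add: \<phi>\<psi>)
    have "MX v1 (Poly_Mapping.keys h) = MX v2 (Poly_Mapping.keys h)"
      unfolding h(2) MX_image[of v1 \<phi> w1, OF w1\<phi>] MX_image[of v2 \<phi> w2, OF w2\<phi>] MXeq ..
    then have inh: "init_form v1 h = init_form v2 h" unfolding init_form_rst by simp
    have "init_form v2 h \<in> J2" unfolding J2_def init_ideal_def using h(1) by (intro subsetD[OF ideal_gen_sub]) blast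
    then show "\<exists>H\<in>I. homog e H \<and> H \<noteq> 0 \<and> lds O1' (Poly_Mapping.keys H) = lds O1' (Poly_Mapping.keys F) \<and> init_form v1 H \<in> J2"
    proof (intro bexI conjI)
      show "homog e h" "h \<noteq> 0" "h \<in> I" using h(1,3) hnz by auto
      show "lds O1' (Poly_Mapping.keys h) = lds O1' (Poly_Mapping.keys F)" using leadh unfolding a'_def .
      show "init_form v1 h \<in> J2" using inh \<open>init_form v2 h \<in> J2\<close> by simp
    qed
  qed
  have "init_ideal v1 I \<subseteq> ideal_gen {init_form v1 f | f. f \<in> I \<and> (\<exists>e\<le>d. homog e f)}"
    by (rule gen_le_d[OF hI h3])
  also have "\<dots> \<subseteq> J2"
    using key by (intro ideal_gen_min[OF idJ2]) blast
  finally show ?thesis unfolding v1_def J2_def v2_def .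
qed


lemma act_wt_inv_cancel:
  assumes "bij g"
  shows "act_wt g (act_wt (inv g) w) = w" "act_wt (inv g) (act_wt g w) = w"
proof -
  have "inv g \<circ> g = id" using assms by (simp add: bij_is_inj)
  then show "act_wt g (act_wt (inv g) w) = w" by (simp add: act_wt_comp act_wt_id)
  have "g \<circ> inv g = id" using bij_is_surj[OF assms] surj_iff by blast
  then show "act_wt (inv g) (act_wt g w) = w" by (simp add: act_wt_comp act_wt_id)
qed

lemma linear_act_wt: "linear (act_wt g :: real ^ ('n::finite) \<Rightarrow> real ^ 'n)"
  by (rule linearI) (simp_all add: act_wt_def vec_eq_iff)

theorem mainTheorem11:
  fixes G :: "('n::finite \<Rightarrow> 'n) set"
    and I :: "('n, 'k::field) mpoly set"
    and d :: nat
  assumes "perm_group G"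
    and "homogeneous_ideal I"
    and "\<forall>J\<in>monomial_initial_ideals I. generated_in_degrees_le J d"
    and "acts_monomially_upto G I d"
  shows "\<forall>g\<in>G. (\<forall>w. \<exists>w'. act_wt g ` Ccone I w = Ccone I w')
               \<and> (\<lambda>F. act_wt g ` F) ` groebner_fan I = groebner_fan I"
proof (intro ballI conjI allI)
  fix g assume gG: "g \<in> G"
  have bg: "bij g" using assms(1) gG by (rule perm_group_bij)
  have igG: "inv g \<in> G" using assms(1) gG by (rule perm_group_inv)
  have JJ: "init_ideal (act_wt h w1) I = init_ideal (act_wt h w2) I"
    if hG: "h \<in> G" and eq: "init_ideal w1 I = init_ideal w2 I" for h w1 w2
  proof -
    have ihG: "inv h \<in> G" using assms(1) hG by (rule perm_group_inv)
    have ii: "inv (inv h) = h" using perm_group_bij[OF assms(1) hG] by (rule inv_inv_eq)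
    show ?thesis
      using CORE[OF assms ihG eq] CORE[OF assms ihG eq[symmetric]] unfolding ii by blast
  qed
  have img: "act_wt g ` Ccone I w = Ccone I (act_wt g w)" for w
  proof
    show "act_wt g ` Ccone I w \<subseteq> Ccone I (act_wt g w)"
      unfolding Ccone_def using JJ[OF gG] by blast
    show "Ccone I (act_wt g w) \<subseteq> act_wt g ` Ccone I w"
    proof
      fix y assume "y \<in> Ccone I (act_wt g w)"
      then have y: "init_ideal y I = init_ideal (act_wt g w) I" unfolding Ccone_def by blast
      have "init_ideal (act_wt (inv g) y) I = init_ideal (act_wt (inv g) (act_wt g w)) I"
        using JJ[OF igG y] .
      then have "act_wt (inv g) y \<in> Ccone I w" unfolding Ccone_def act_wt_inv_cancel[OF bg] by simp
      moreover have "y = act_wt g (act_wt (inv g) y)" using act_wt_inv_cancel[OF bg] by simp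
      ultimately show "y \<in> act_wt g ` Ccone I w" by blast
    qed
  qed
  fix w
  show "\<exists>w'. act_wt g ` Ccone I w = Ccone I w'" using img by blast
next
  fix g assume gG: "g \<in> G"
  have bg: "bij g" using assms(1) gG by (rule perm_group_bij)
  have igG: "inv g \<in> G" using assms(1) gG by (rule perm_group_inv)
  have JJ: "init_ideal (act_wt h w1) I = init_ideal (act_wt h w2) I"
    if hG: "h \<in> G" and eq: "init_ideal w1 I = init_ideal w2 I" for h w1 w2
  proof -
    have ihG: "inv h \<in> G" using assms(1) hG by (rule perm_group_inv)
    have ii: "inv (inv h) = h" using perm_group_bij[OF assms(1) hG] by (rule inv_inv_eq)
    show ?thesis
      using CORE[OF assms ihG eq] CORE[OF assms ihG eq[symmetric]] unfolding ii by blast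
  qed
  have img: "act_wt g ` Ccone I w = Ccone I (act_wt g w)" for w
  proof
    show "act_wt g ` Ccone I w \<subseteq> Ccone I (act_wt g w)"
      unfolding Ccone_def using JJ[OF gG] by blast
    show "Ccone I (act_wt g w) \<subseteq> act_wt g ` Ccone I w"
    proof
      fix y assume "y \<in> Ccone I (act_wt g w)"
      then have y: "init_ideal y I = init_ideal (act_wt g w) I" unfolding Ccone_def by blast
      have "init_ideal (act_wt (inv g) y) I = init_ideal (act_wt (inv g) (act_wt g w)) I"
        using JJ[OF igG y] .
      then have "act_wt (inv g) y \<in> Ccone I w" unfolding Ccone_def act_wt_inv_cancel[OF bg] by simp
      moreover have "y = act_wt g (act_wt (inv g) y)" using act_wt_inv_cancel[OF bg] by simp
      ultimately show "y \<in> act_wt g ` Ccone I w" by blast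
    qed
  qed
  have injg: "inj (act_wt g :: real ^ 'n \<Rightarrow> real ^ 'n)"
    by (rule injI) (metis act_wt_inv_cancel(2)[OF bg])
  have cl: "act_wt g ` closure S = closure (act_wt g ` S)" for S :: "(real ^ 'n) set"
    by (rule closure_injective_linear_image[OF linear_act_wt injg])
  show "(\<lambda>F. act_wt g ` F) ` groebner_fan I = groebner_fan I"
    unfolding groebner_fan_def
  proof
    show "(\<lambda>F. act_wt g ` F) ` {closure (Ccone I w) |w. True} \<subseteq> {closure (Ccone I w) |w. True}"
      using cl img by auto
    show "{closure (Ccone I w) |w. True} \<subseteq> (\<lambda>F. act_wt g ` F) ` {closure (Ccone I w) |w. True}"
    proof
      fix F assume "F \<in> {closure (Ccone I w) |w. True}"
      then obtain w where F: "F = closure (Ccone I w)" by blast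
      have "F = act_wt g ` closure (Ccone I (act_wt (inv g) w))"
        unfolding F cl img act_wt_inv_cancel[OF bg] ..
      then show "F \<in> (\<lambda>F. act_wt g ` F) ` {closure (Ccone I w) |w. True}" by blast
    qed
  qed
qed

end
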